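(* Consider a sequence of populations with $|\mathcal{I}|\to\infty$, each consisting of a set $\mathcal{I}$ of independent accounts and a dependent block $\mathcal{D}$, with real random variables $X_i$ having finite fourth moments and variances $\sigma_i^2>0$, the $X_i$ ($i\in\mathcal{I}$) mutually independent and independent of $(X_i)_{i\in\mathcal{D}}$. Let $X_{\mathcal{D}}=\sum_{i\in\mathcal{D}}X_i$ with variance $\sigma^2_{\mathcal{D}}>0$ and kurtosis $\kappa_{\mathcal{D}}$, $X_{\mathcal{I}}=\sum_{i\in\mathcal{I}}X_i$, $X=X_{\mathcal{D}}+X_{\mathcal{I}}$. Simulated realisations: for $i\in\mathcal{I}$, $R_i$ i.i.d. copies $X_i^{(k)}$ of $X_i$; for the block, $R_{\mathcal{D}}\ge2$ i.i.d. copies of $(X_i)_{i\in\mathcal{D}}$ with totals $X_{\mathcal{D}}^{(k)}$; all simulations mutually independent and independent of $(X_i)_i$. Let $\bar X_i,\bar X_{\mathcal{D}}$ be sample means, $\hat\mu=\bar X_{\mathcal{D}}+\sum_{i\in\mathcal{I}}\bar X_i$, $\hat\sigma_i^2$ and $\hat\sigma_{\mathcal{D}}^2$ the (unbiased, divisor $R-1$) sample variances of the realisations, and $\hat\sigma^2_{(X-\hat\mu)}=\hat\sigma^2_{\mathcal{D}}(1+1/R_{\mathcal{D}})+\sum_{i\in\mathcal{I}}\hat\sigma_i^2(1+1/R_i)$; let $\sigma^2_{(X-\hat\mu)}=\operatorname{Var}(X-\hat\mu)$. With $\bar\sigma^2=\frac1{|\mathcal{I}|}\sum_{i\in\mathcal{I}}\sigma_i^2$,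 $\gamma^2=(\frac1{|\mathcal{I}|}\sum_{i\in\mathcal{I}}\sigma_i^4-\bar\sigma^4)/\bar\sigma^4$ and $\kappa_i$ the kurtosis of $X_i$, assume (R1) $R_i\ge2$ for all $i\in\mathcal{I}$, fixed integers; (R2) $\kappa_i\le\kappa_{\max}$ for all $i\in\mathcal{I}$ with $\kappa_{\max}$ independent of $|\mathcal{I}|$; (R3) $\gamma^2$ bounded as $|\mathcal{I}|\to\infty$. Assume further that either $\sigma^4_{\mathcal{D}}(\kappa_{\mathcal{D}}+1)=o(\bar\sigma^4|\mathcal{I}|^2)$, or $\sigma^4_{\mathcal{D}}(\kappa_{\mathcal{D}}+1)=O(\bar\sigma^4|\mathcal{I}|^2)$ and $R_{\mathcal{D}}\to\infty$. Then $\hat\sigma^2_{(X-\hat\mu)}$ is unbiased for $\sigma^2_{(X-\hat\mu)}$ and relatively consistent: $\hat\sigma^2_{(X-\hat\mu)}/\sigma^2_{(X-\hat\mu)}\to1$ in probability as $|\mathcal{I}|\to\infty$.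
   Context: Kurtosis of $Y$ with variance $s^2$ is $\operatorname{E}[(Y-\operatorname{E}Y)^4]/s^4$. $f=O(g)$: $f/g$ eventually bounded; $f=o(g)$: $f/g\to0$. *)

theory Defs
  imports "HOL-Probability.Probability" "HOL-Library.Landau_Symbols"
begin

definition mean :: "'a measure \<Rightarrow> ('a \<Rightarrow> real) \<Rightarrow> real" where
  "mean M Y = integral\<^sup>L M Y"

definition var :: "'a measure \<Rightarrow> ('a \<Rightarrow> real) \<Rightarrow> real" where
  "var M Y = integral\<^sup>L M (\<lambda>\<omega>. (Y \<omega> - mean M Y)^2)"

definition kurt :: "'a measure \<Rightarrow> ('a \<Rightarrow> real) \<Rightarrow> real" where
  "kurt M Y = integral\<^sup>L M (\<lambda>\<omega>. (Y \<omega> - mean M Y)^4) / (var M Y)^2"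

definition sample_mean :: "nat \<Rightarrow> (nat \<Rightarrow> 'a \<Rightarrow> real) \<Rightarrow> 'a \<Rightarrow> real" where
  "sample_mean R f \<omega> = (\<Sum>k<R. f k \<omega>) / real R"

definition sample_var :: "nat \<Rightarrow> (nat \<Rightarrow> 'a \<Rightarrow> real) \<Rightarrow> 'a \<Rightarrow> real" where
  "sample_var R f \<omega> = (\<Sum>k<R. (f k \<omega> - sample_mean R f \<omega>)^2) / (real R - 1)"

text \<open>I: independent accounts, D: dependent block, X i: the original variables,
  Xs i k: k-th simulated copy of X i (i in I), XsD k j: coordinate j of the k-th
  simulated copy of the block (X j) (j in D), R i / RD: numbers of realisations.\<close>

definition XD_tot :: "nat set \<Rightarrow> (nat \<Rightarrow> 'a \<Rightarrow> real) \<Rightarrow> 'a \<Rightarrow> real" where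
  "XD_tot D X \<omega> = (\<Sum>j\<in>D. X j \<omega>)"

definition X_tot :: "nat set \<Rightarrow> nat set \<Rightarrow> (nat \<Rightarrow> 'a \<Rightarrow> real) \<Rightarrow> 'a \<Rightarrow> real" where
  "X_tot I D X \<omega> = XD_tot D X \<omega> + (\<Sum>i\<in>I. X i \<omega>)"

definition mu_hat ::
  "nat set \<Rightarrow> nat set \<Rightarrow> (nat \<Rightarrow> nat) \<Rightarrow> nat \<Rightarrow> (nat \<Rightarrow> nat \<Rightarrow> 'a \<Rightarrow> real)
   \<Rightarrow> (nat \<Rightarrow> nat \<Rightarrow> 'a \<Rightarrow> real) \<Rightarrow> 'a \<Rightarrow> real" where
  "mu_hat I D R RD Xs XsD \<omega> =
     sample_mean RD (\<lambda>k. XD_tot D (XsD k)) \<omega> + (\<Sum>i\<in>I. sample_mean (R i) (Xs i) \<omega>)"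

definition sigma2_hat ::
  "nat set \<Rightarrow> nat set \<Rightarrow> (nat \<Rightarrow> nat) \<Rightarrow> nat \<Rightarrow> (nat \<Rightarrow> nat \<Rightarrow> 'a \<Rightarrow> real)
   \<Rightarrow> (nat \<Rightarrow> nat \<Rightarrow> 'a \<Rightarrow> real) \<Rightarrow> 'a \<Rightarrow> real" where
  "sigma2_hat I D R RD Xs XsD \<omega> =
     sample_var RD (\<lambda>k. XD_tot D (XsD k)) \<omega> * (1 + 1 / real RD)
     + (\<Sum>i\<in>I. sample_var (R i) (Xs i) \<omega> * (1 + 1 / real (R i)))"

definition sigma_bar2 :: "'a measure \<Rightarrow> nat set \<Rightarrow> (nat \<Rightarrow> 'a \<Rightarrow> real) \<Rightarrow> real" where
  "sigma_bar2 M I X = (\<Sum>i\<in>I. var M (X i)) / real (card I)"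

definition gamma2 :: "'a measure \<Rightarrow> nat set \<Rightarrow> (nat \<Rightarrow> 'a \<Rightarrow> real) \<Rightarrow> real" where
  "gamma2 M I X =
     ((\<Sum>i\<in>I. (var M (X i))^2) / real (card I) - (sigma_bar2 M I X)^2) / (sigma_bar2 M I X)^2"

text \<open>The independent components: each original X i (i in I), the original block
  (X j)_{j in D}, each simulated X i copy, each simulated block copy.  Each is viewed
  as a random vector indexed by its coordinate set.\<close>

datatype comp = OrigInd nat | OrigBlock | SimInd nat nat | SimBlock nat

definition comps :: "nat set \<Rightarrow> (nat \<Rightarrow> nat) \<Rightarrow> nat \<Rightarrow> comp set" where
  "comps I R RD = OrigInd ` I \<union> {OrigBlock} \<union> {SimInd i k | i k. i \<in> I \<and> k < R i}
                   \<union> SimBlock ` {..<RD}"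

definition coords :: "nat set \<Rightarrow> comp \<Rightarrow> nat set" where
  "coords D c = (case c of OrigInd i \<Rightarrow> {i} | OrigBlock \<Rightarrow> D | SimInd i k \<Rightarrow> {i}
                  | SimBlock k \<Rightarrow> D)"

definition compvar ::
  "nat set \<Rightarrow> (nat \<Rightarrow> 'a \<Rightarrow> real) \<Rightarrow> (nat \<Rightarrow> nat \<Rightarrow> 'a \<Rightarrow> real) \<Rightarrow> (nat \<Rightarrow> nat \<Rightarrow> 'a \<Rightarrow> real)
   \<Rightarrow> comp \<Rightarrow> 'a \<Rightarrow> (nat \<Rightarrow> real)" where
  "compvar D X Xs XsD c \<omega> = (case c of
       OrigInd i \<Rightarrow> restrict (\<lambda>j. X j \<omega>) {i}
     | OrigBlock \<Rightarrow> restrict (\<lambda>j. X j \<omega>) D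
     | SimInd i k \<Rightarrow> restrict (\<lambda>j. Xs i k \<omega>) {i}
     | SimBlock k \<Rightarrow> restrict (\<lambda>j. XsD k j \<omega>) D)"

end

theory Submission
  imports Defs
begin



lemma sq_add_le: "((a::real) + b)^2 \<le> 2 * (a^2 + b^2)"
proof -
  have "2*(a^2+b^2) - (a+b)^2 = (a-b)^2" by (simp add: power2_eq_square algebra_simps)
  then show ?thesis using zero_le_power2[of "a-b"] by linarith
qed

lemma pow4_add_le: "((a::real) + b)^4 \<le> 8 * (a^4 + b^4)"
proof -
  have 2: "(a^2+b^2)^2 \<le> 2*((a^2)^2+(b^2)^2)" by (rule sq_add_le)
  have "(a+b)^4 = ((a+b)^2)^2" by simp
  also have "\<dots> \<le> (2*(a^2+b^2))^2" using sq_add_le[of a b] by (intro power_mono) auto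
  also have "\<dots> = 4 * (a^2+b^2)^2" by (simp add: power2_eq_square algebra_simps)
  also have "\<dots> \<le> 8 * (a^4+b^4)" using 2 by (simp add: power_mult[symmetric])
  finally show ?thesis .
qed

lemma pow4_add_norm: "norm (((a::real) + b)^4) \<le> norm (8 * (a^4 + b^4))"
proof -
  have "(a+b)^4 = ((a+b)^2)^2" by simp
  then have "0 \<le> (a+b)^4" by (metis zero_le_power2)
  then show ?thesis using pow4_add_le[of a b] abs_ge_self[of "8 * (a^4 + b^4)"] by simp
qed

lemma sq_add_norm: "norm (((a::real) + b)^2) \<le> norm (2 * (a^2 + b^2))"
  using sq_add_le[of a b] by simp

lemma sq_mult_le: "((a::real) * b)^2 \<le> (a^4 + b^4)"
proof -
  have "a^4 + b^4 - (a*b)^2 = (a^2 - b^2)^2 + (a*b)^2" by (simp add: power2_eq_square algebra_simps power4_eq_xxxx)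
  then show ?thesis using zero_le_power2[of "a^2-b^2"] zero_le_power2[of "a*b"] by linarith
qed

lemma abs_mult_le: "\<bar>(a::real) * b\<bar> \<le> a^2 + b^2"
proof -
  have "a^2 + b^2 - 2*\<bar>a*b\<bar> = (\<bar>a\<bar> - \<bar>b\<bar>)^2" by (simp add: power2_eq_square algebra_simps abs_mult)
  then show ?thesis using zero_le_power2[of "\<bar>a\<bar> - \<bar>b\<bar>"] abs_ge_zero[of "a*b"] by linarith
qed

lemma sq_mult_norm: "norm (((a::real) * b)^2) \<le> norm (a^4 + b^4)"
  using sq_mult_le[of a b] by simp

lemma abs_mult_norm: "norm ((a::real) * b) \<le> norm (a^2 + b^2)"
  using abs_mult_le[of a b] by simp

context prob_space begin

definition L4 :: "('a \<Rightarrow> real) \<Rightarrow> bool" where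
  "L4 f \<longleftrightarrow> f \<in> borel_measurable M \<and> integrable M (\<lambda>\<omega>. f \<omega> ^ 4)"
definition L2 :: "('a \<Rightarrow> real) \<Rightarrow> bool" where
  "L2 f \<longleftrightarrow> f \<in> borel_measurable M \<and> integrable M (\<lambda>\<omega>. f \<omega> ^ 2)"

lemma L4_const: "L4 (\<lambda>_. c)" by (simp add: L4_def)
lemma L2_const: "L2 (\<lambda>_. c)" by (simp add: L2_def)

lemma L4_add: assumes "L4 f" "L4 g" shows "L4 (\<lambda>\<omega>. f \<omega> + g \<omega>)"
proof -
  have [measurable]: "f \<in> borel_measurable M" "g \<in> borel_measurable M" using assms by (auto simp: L4_def)
  have "integrable M (\<lambda>\<omega>. 8 * (f \<omega> ^ 4 + g \<omega> ^4))" using assms by (auto simp: L4_def)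
  then have "integrable M (\<lambda>\<omega>. (f \<omega> + g \<omega>) ^ 4)"
    by (rule Bochner_Integration.integrable_bound) (measurable, auto intro!: always_eventually simp only: pow4_add_norm)
  then show ?thesis by (simp add: L4_def)
qed

lemma L4_scale: assumes "L4 f" shows "L4 (\<lambda>\<omega>. c * f \<omega>)"
proof -
  have [measurable]: "f \<in> borel_measurable M" using assms by (simp add: L4_def)
  show ?thesis using assms by (simp add: L4_def power_mult_distrib)
qed

lemma L4_diff: assumes "L4 f" "L4 g" shows "L4 (\<lambda>\<omega>. f \<omega> - g \<omega>)"
  using L4_add[OF assms(1) L4_scale[OF assms(2), of "-1"]] by simp

lemma L4_sum: "finite A \<Longrightarrow> (\<And>i. i \<in> A \<Longrightarrow> L4 (f i)) \<Longrightarrow> L4 (\<lambda>\<omega>. \<Sum>i\<in>A. f i \<omega>)"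
  by (induction A rule: finite_induct) (auto intro!: L4_add L4_const)

lemma L4_mult: assumes "L4 f" "L4 g" shows "L2 (\<lambda>\<omega>. f \<omega> * g \<omega>)"
proof -
  have [measurable]: "f \<in> borel_measurable M" "g \<in> borel_measurable M" using assms by (auto simp: L4_def)
  have "integrable M (\<lambda>\<omega>. (f \<omega> ^ 4 + g \<omega> ^4))" using assms by (auto simp: L4_def)
  then have "integrable M (\<lambda>\<omega>. (f \<omega> * g \<omega>) ^ 2)"
    by (rule Bochner_Integration.integrable_bound) (measurable, auto intro!: always_eventually simp only: sq_mult_norm)
  then show ?thesis by (simp add: L2_def)
qed

lemma L4_L2: "L4 f \<Longrightarrow> L2 f"
  using L4_mult[OF _ L4_const, of f 1] by simp

lemma L2_add: assumes "L2 f" "L2 g" shows "L2 (\<lambda>\<omega>. f \<omega> + g \<omega>)"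
proof -
  have [measurable]: "f \<in> borel_measurable M" "g \<in> borel_measurable M" using assms by (auto simp: L2_def)
  have "integrable M (\<lambda>\<omega>. 2 * (f \<omega> ^ 2 + g \<omega> ^2))" using assms by (auto simp: L2_def)
  then have "integrable M (\<lambda>\<omega>. (f \<omega> + g \<omega>) ^ 2)"
    by (rule Bochner_Integration.integrable_bound) (measurable, auto intro!: always_eventually simp only: sq_add_norm)
  then show ?thesis by (simp add: L2_def)
qed

lemma L2_scale: assumes "L2 f" shows "L2 (\<lambda>\<omega>. c * f \<omega>)"
proof -
  have [measurable]: "f \<in> borel_measurable M" using assms by (simp add: L2_def)
  show ?thesis using assms by (simp add: L2_def power_mult_distrib)
qed

lemma L2_diff: assumes "L2 f" "L2 g" shows "L2 (\<lambda>\<omega>. f \<omega> - g \<omega>)"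
  using L2_add[OF assms(1) L2_scale[OF assms(2), of "-1"]] by simp

lemma L2_sum: "finite A \<Longrightarrow> (\<And>i. i \<in> A \<Longrightarrow> L2 (f i)) \<Longrightarrow> L2 (\<lambda>\<omega>. \<Sum>i\<in>A. f i \<omega>)"
  by (induction A rule: finite_induct) (auto intro!: L2_add L2_const)

lemma L2_int: "L2 f \<Longrightarrow> integrable M f"
  unfolding L2_def by (auto intro: square_integrable_imp_integrable)

lemma L2_mult_int: assumes "L2 f" "L2 g" shows "integrable M (\<lambda>\<omega>. f \<omega> * g \<omega>)"
proof -
  have [measurable]: "f \<in> borel_measurable M" "g \<in> borel_measurable M" using assms by (auto simp: L2_def)
  have "integrable M (\<lambda>\<omega>. (f \<omega> ^ 2 + g \<omega> ^2))" using assms by (auto simp: L2_def)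
  then show ?thesis
    by (rule Bochner_Integration.integrable_bound) (measurable, auto intro!: always_eventually simp only: abs_mult_norm)
qed

lemma L2_meas: "L2 f \<Longrightarrow> f \<in> borel_measurable M" by (simp add: L2_def)
lemma L4_meas: "L4 f \<Longrightarrow> f \<in> borel_measurable M" by (simp add: L4_def)

lemma orth_sum_sq:
  assumes "finite A" "\<And>i. i \<in> A \<Longrightarrow> L2 (V i)"
    "\<And>i j. i \<in> A \<Longrightarrow> j \<in> A \<Longrightarrow> i \<noteq> j \<Longrightarrow> expectation (\<lambda>\<omega>. V i \<omega> * V j \<omega>) = 0"
  shows "expectation (\<lambda>\<omega>. (\<Sum>i\<in>A. V i \<omega>)^2) = (\<Sum>i\<in>A. expectation (\<lambda>\<omega>. (V i \<omega>)^2))"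
proof -
  have "expectation (\<lambda>\<omega>. (\<Sum>i\<in>A. V i \<omega>)^2) = expectation (\<lambda>\<omega>. \<Sum>i\<in>A. \<Sum>j\<in>A. V i \<omega> * V j \<omega>)"
    by (simp add: power2_eq_square sum_product)
  also have "\<dots> = (\<Sum>i\<in>A. \<Sum>j\<in>A. expectation (\<lambda>\<omega>. V i \<omega> * V j \<omega>))"
    using assms by (simp add: Bochner_Integration.integral_sum L2_mult_int)
  also have "\<dots> = (\<Sum>i\<in>A. \<Sum>j\<in>A. if j = i then expectation (\<lambda>\<omega>. (V i \<omega>)^2) else 0)"
    using assms by (intro sum.cong refl) (auto simp: power2_eq_square)
  also have "\<dots> = (\<Sum>i\<in>A. expectation (\<lambda>\<omega>. (V i \<omega>)^2))"
    using assms(1) by (simp add: sum.delta)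
  finally show ?thesis .
qed

end



lemma ssq_identity:
  fixes a :: "nat \<Rightarrow> real"
  assumes "R > 0"
  shows "(\<Sum>k<R. (a k - (\<Sum>l<R. a l) / real R)^2)
       = (\<Sum>k<R. (a k - c)^2) - (\<Sum>k<R. (a k - c))^2 / real R"
proof -
  define z where "z k = a k - c" for k
  define zb where "zb = (\<Sum>l<R. z l) / real R"
  have Rne: "real R \<noteq> 0" using assms by simp
  have "(\<Sum>l<R. a l) / real R = zb + c"
    using Rne by (simp add: zb_def z_def sum_subtractf field_simps)
  then have "(\<Sum>k<R. (a k - (\<Sum>l<R. a l) / real R)^2) = (\<Sum>k<R. (z k - zb)^2)"
    by (simp add: z_def algebra_simps)
  also have "\<dots> = (\<Sum>k<R. (z k)^2) - 2 * zb * (\<Sum>k<R. z k) + real R * zb^2"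
    by (simp add: power2_diff sum.distrib sum_subtractf sum_distrib_left mult_ac)
  also have "\<dots> = (\<Sum>k<R. (z k)^2) - (\<Sum>k<R. z k)^2 / real R"
    using Rne by (simp add: zb_def power2_eq_square field_simps)
  finally show ?thesis by (simp add: z_def)
qed

lemma sample_var_alt:
  assumes "R > 0"
  shows "sample_var R Y \<omega> = ((\<Sum>k<R. (Y k \<omega> - c)^2) - (\<Sum>k<R. (Y k \<omega> - c))^2 / real R) / (real R - 1)"
  unfolding sample_var_def sample_mean_def using ssq_identity[OF assms, of "\<lambda>k. Y k \<omega>" c] by simp

lemma sample_var_nonneg: "R \<ge> 2 \<Longrightarrow> sample_var R Y \<omega> \<ge> 0"
  unfolding sample_var_def by (auto intro!: divide_nonneg_nonneg sum_nonneg)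

lemma sample_var_le:
  assumes "R \<ge> 2"
  shows "sample_var R Y \<omega> \<le> (\<Sum>k<R. (Y k \<omega> - c)^2) / (real R - 1)"
proof -
  have "R > 0" using assms by simp
  have "real R - 1 > 0" using assms by simp
  then show ?thesis unfolding sample_var_alt[OF \<open>R > 0\<close>, of Y \<omega> c]
    by (intro divide_right_mono) auto
qed

context prob_space begin

lemma sample_group:
  fixes Y :: "nat \<Rightarrow> 'a \<Rightarrow> real"
  assumes R: "R \<ge> 2"
    and L: "\<And>k. k < R \<Longrightarrow> L4 (Y k)"
    and m1: "\<And>k. k < R \<Longrightarrow> expectation (Y k) = \<mu>"
    and m2: "\<And>k. k < R \<Longrightarrow> expectation (\<lambda>\<omega>. (Y k \<omega> - \<mu>)^2) = s"
    and m4: "\<And>k. k < R \<Longrightarrow> expectation (\<lambda>\<omega>. (Y k \<omega> - \<mu>)^4) = q"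
    and p1: "\<And>k l. k < R \<Longrightarrow> l < R \<Longrightarrow> k \<noteq> l \<Longrightarrow>
               expectation (\<lambda>\<omega>. (Y k \<omega> - \<mu>) * (Y l \<omega> - \<mu>)) = 0"
    and p2: "\<And>k l. k < R \<Longrightarrow> l < R \<Longrightarrow> k \<noteq> l \<Longrightarrow>
               expectation (\<lambda>\<omega>. (Y k \<omega> - \<mu>)^2 * (Y l \<omega> - \<mu>)^2) = s * s"
  shows "L2 (sample_var R Y)"
    and "expectation (sample_var R Y) = s"
    and "expectation (\<lambda>\<omega>. (sample_var R Y \<omega>)^2) \<le> (real R * q + real R * (real R - 1) * s^2) / (real R - 1)^2"
proof -
  have R0: "R > 0" and R1: "real R - 1 > 0" using R by auto
  define Z where "Z k \<omega> = Y k \<omega> - \<mu>" for k \<omega>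
  have LZ: "L4 (Z k)" if "k < R" for k unfolding Z_def by (intro L4_diff L4_const L that)
  have LZ2: "L2 (Z k)" if "k < R" for k using LZ[OF that] by (rule L4_L2)
  have LZsq: "L2 (\<lambda>\<omega>. (Z k \<omega>)^2)" if "k < R" for k
    using L4_mult[OF LZ[OF that] LZ[OF that]] by (simp add: power2_eq_square)
  have sv: "sample_var R Y \<omega> = ((\<Sum>k<R. (Z k \<omega>)^2) - (\<Sum>k<R. Z k \<omega>)^2 / real R) / (real R - 1)" for \<omega>
    unfolding Z_def by (rule sample_var_alt[OF R0])
  have Lsum: "L4 (\<lambda>\<omega>. \<Sum>k<R. Z k \<omega>)" by (intro L4_sum LZ) auto
  have Lsumsq: "L2 (\<lambda>\<omega>. \<Sum>k<R. (Z k \<omega>)^2)" by (intro L2_sum LZsq) auto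
  have Lsq: "L2 (\<lambda>\<omega>. (\<Sum>k<R. Z k \<omega>)^2)" using L4_mult[OF Lsum Lsum] by (simp add: power2_eq_square)
  show L2sv: "L2 (sample_var R Y)"
    unfolding sv by (intro L2_scale[where c="1/(real R - 1)", simplified] L2_diff Lsumsq L2_scale[where c="1/real R", simplified] Lsq)
  have E1: "expectation (\<lambda>\<omega>. (\<Sum>k<R. Z k \<omega>)^2) = real R * s"
  proof -
    have "expectation (\<lambda>\<omega>. (\<Sum>k<R. Z k \<omega>)^2) = (\<Sum>k<R. expectation (\<lambda>\<omega>. (Z k \<omega>)^2))"
      using LZ2 p1 unfolding Z_def by (intro orth_sum_sq) auto
    also have "\<dots> = real R * s" using m2 by (simp add: Z_def)
    finally show ?thesis .
  qed
  have E2: "expectation (\<lambda>\<omega>. \<Sum>k<R. (Z k \<omega>)^2) = real R * s"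
    using m2 LZsq by (simp add: Bochner_Integration.integral_sum L2_int Z_def)
  show "expectation (sample_var R Y) = s"
    unfolding sv using Lsumsq Lsq R1 R0
    by (simp add: E1 E2 L2_int Bochner_Integration.integral_diff field_simps)
  have "expectation (\<lambda>\<omega>. (sample_var R Y \<omega>)^2) \<le> expectation (\<lambda>\<omega>. ((\<Sum>k<R. (Z k \<omega>)^2) / (real R - 1))^2)"
  proof (rule integral_mono)
    show "integrable M (\<lambda>\<omega>. (sample_var R Y \<omega>)^2)" using L2sv by (simp add: L2_def)
    show "integrable M (\<lambda>\<omega>. ((\<Sum>k<R. (Z k \<omega>)^2) / (real R - 1))^2)"
      using L2_scale[OF Lsumsq, of "1/(real R - 1)"] by (simp add: L2_def)
    fix \<omega> show "(sample_var R Y \<omega>)^2 \<le> ((\<Sum>k<R. (Z k \<omega>)^2) / (real R - 1))^2"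
      using sample_var_nonneg[OF R] sample_var_le[OF R, of Y \<omega> \<mu>] by (intro power_mono) (auto simp: Z_def)
  qed
  also have "\<dots> = expectation (\<lambda>\<omega>. \<Sum>k<R. \<Sum>l<R. (Z k \<omega>)^2 * (Z l \<omega>)^2) / (real R - 1)^2"
    by (simp add: power_divide power2_eq_square[of "sum _ _"] sum_product)
  also have "expectation (\<lambda>\<omega>. \<Sum>k<R. \<Sum>l<R. (Z k \<omega>)^2 * (Z l \<omega>)^2)
      = (\<Sum>k<R. \<Sum>l<R. expectation (\<lambda>\<omega>. (Z k \<omega>)^2 * (Z l \<omega>)^2))"
  proof -
    have i1: "integrable M (\<lambda>\<omega>. (Z k \<omega>)^2 * (Z l \<omega>)^2)" if "k < R" "l < R" for k l
      using LZsq that by (intro L2_mult_int) auto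
    have i2: "integrable M (\<lambda>\<omega>. \<Sum>l<R. (Z k \<omega>)^2 * (Z l \<omega>)^2)" if "k < R" for k
      using i1 that by (intro Bochner_Integration.integrable_sum) auto
    show ?thesis using i1 i2 by (simp add: Bochner_Integration.integral_sum)
  qed
  also have "\<dots> = (\<Sum>k<R. \<Sum>l<R. s * s + (if l = k then q - s * s else 0))"
    using m4 p2 by (intro sum.cong refl) (auto simp: Z_def power4_eq_xxxx power2_eq_square mult.assoc)
  also have "\<dots> = real R * q + real R * (real R - 1) * s^2"
    by (simp add: sum.distrib power2_eq_square algebra_simps)
  finally show "expectation (\<lambda>\<omega>. (sample_var R Y \<omega>)^2) \<le> (real R * q + real R * (real R - 1) * s^2) / (real R - 1)^2" .
qed

end



fun orig :: "nat option \<Rightarrow> comp" where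
  "orig None = OrigBlock" | "orig (Some i) = OrigInd i"
fun cp :: "nat option \<Rightarrow> nat \<Rightarrow> comp" where
  "cp None k = SimBlock k" | "cp (Some i) k = SimInd i k"

lemma orig_inj[simp]: "orig g = orig h \<longleftrightarrow> g = h"
  by (cases g; cases h) auto
lemma cp_inj[simp]: "cp g k = cp h l \<longleftrightarrow> g = h \<and> k = l"
  by (cases g; cases h) auto
lemma orig_cp[simp]: "orig g \<noteq> cp h k" "cp h k \<noteq> orig g"
  by (cases g; cases h; auto)+

definition CC :: "nat option set \<Rightarrow> (nat option \<Rightarrow> nat) \<Rightarrow> comp set" where
  "CC G Rg = orig ` G \<union> {cp g k | g k. g \<in> G \<and> k < Rg g}"
definition grpset :: "(nat option \<Rightarrow> nat) \<Rightarrow> nat option \<Rightarrow> comp set" where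
  "grpset Rg g = insert (orig g) (cp g ` {..<Rg g})"

lemma grpset_disj: "g \<noteq> h \<Longrightarrow> grpset Rg g \<inter> grpset Rg h = {}"
  by (auto simp: grpset_def)
lemma grpset_sub: "g \<in> G \<Longrightarrow> grpset Rg g \<subseteq> CC G Rg"
  by (auto simp: grpset_def CC_def)
lemma orig_CC[simp]: "g \<in> G \<Longrightarrow> orig g \<in> CC G Rg" by (auto simp: CC_def)
lemma cp_CC[simp]: "g \<in> G \<Longrightarrow> k < Rg g \<Longrightarrow> cp g k \<in> CC G Rg" by (auto simp: CC_def)
lemma orig_grp[simp]: "orig g \<in> grpset Rg g" by (auto simp: grpset_def)
lemma cp_grp[simp]: "k < Rg g \<Longrightarrow> cp g k \<in> grpset Rg g" by (auto simp: grpset_def)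

lemma meas_cp_grp[measurable]:
  "k < Rg g \<Longrightarrow> (\<lambda>x. x (cp g k)) \<in> borel_measurable (PiM (grpset Rg g) (\<lambda>_. borel))"
  by (rule measurable_component_singleton) simp
lemma meas_orig_grp[measurable]:
  "(\<lambda>x. x (orig g)) \<in> borel_measurable (PiM (grpset Rg g) (\<lambda>_. borel))"
  by (rule measurable_component_singleton) simp

lemma sample_var_cong:
  "(\<And>k. k < R \<Longrightarrow> f k \<omega> = f' k \<omega>') \<Longrightarrow> sample_var R f \<omega> = sample_var R f' \<omega>'"
proof -
  assume a: "\<And>k. k < R \<Longrightarrow> f k \<omega> = f' k \<omega>'"
  have "(\<Sum>k<R. f k \<omega>) = (\<Sum>k<R. f' k \<omega>')" using a by (intro sum.cong) auto
  then show ?thesis unfolding sample_var_def sample_mean_def using a by (intro arg_cong2[where f="(/)"] sum.cong) auto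
qed

locale popn = prob_space M for M :: "'a measure" +
  fixes G :: "nat option set" and Rg :: "nat option \<Rightarrow> nat" and S :: "comp \<Rightarrow> 'a \<Rightarrow> real"
  assumes finG: "finite G"
    and indS: "indep_vars (\<lambda>_. borel) S (CC G Rg)"
    and L4o: "\<And>g. g \<in> G \<Longrightarrow> L4 (S (orig g))"
    and Rg2: "\<And>g. g \<in> G \<Longrightarrow> 2 \<le> Rg g"
    and dist: "\<And>g k. g \<in> G \<Longrightarrow> k < Rg g \<Longrightarrow> distr M borel (S (cp g k)) = distr M borel (S (orig g))"
begin

lemma measS: "c \<in> CC G Rg \<Longrightarrow> S c \<in> borel_measurable M"
  using indS unfolding indep_vars_def by auto

lemma transfer:
  fixes h :: "real \<Rightarrow> real"
  assumes g: "g \<in> G" "k < Rg g" and h[measurable]: "h \<in> borel_measurable borel"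
  shows "expectation (\<lambda>\<omega>. h (S (cp g k) \<omega>)) = expectation (\<lambda>\<omega>. h (S (orig g) \<omega>))"
    and "integrable M (\<lambda>\<omega>. h (S (cp g k) \<omega>)) = integrable M (\<lambda>\<omega>. h (S (orig g) \<omega>))"
proof -
  have [measurable]: "S (cp g k) \<in> borel_measurable M" "S (orig g) \<in> borel_measurable M"
    using g by (auto intro: measS)
  have "integral\<^sup>L (distr M borel (S (cp g k))) h = expectation (\<lambda>\<omega>. h (S (cp g k) \<omega>))"
    by (rule integral_distr) measurable
  then have "expectation (\<lambda>\<omega>. h (S (cp g k) \<omega>)) = integral\<^sup>L (distr M borel (S (cp g k))) h" ..
  also have "\<dots> = integral\<^sup>L (distr M borel (S (orig g))) h" using dist[OF g] by simp
  also have "\<dots> = expectation (\<lambda>\<omega>. h (S (orig g) \<omega>))" by (rule integral_distr) measurable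
  finally show "expectation (\<lambda>\<omega>. h (S (cp g k) \<omega>)) = expectation (\<lambda>\<omega>. h (S (orig g) \<omega>))" .
  have "integrable M (\<lambda>\<omega>. h (S (cp g k) \<omega>)) = integrable (distr M borel (S (cp g k))) h"
    by (rule integrable_distr_eq[symmetric]) measurable
  also have "\<dots> = integrable (distr M borel (S (orig g))) h" using dist[OF g] by simp
  also have "\<dots> = integrable M (\<lambda>\<omega>. h (S (orig g) \<omega>))" by (rule integrable_distr_eq) measurable
  finally show "integrable M (\<lambda>\<omega>. h (S (cp g k) \<omega>)) = integrable M (\<lambda>\<omega>. h (S (orig g) \<omega>))" .
qed

lemma L4c: "g \<in> G \<Longrightarrow> k < Rg g \<Longrightarrow> L4 (S (cp g k))"
  using L4o[of g] transfer(2)[of g k "\<lambda>x. x^4"] measS[of "cp g k"] by (simp add: L4_def)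

lemma indep_sets:
  fixes P Q :: "'a \<Rightarrow> real"
  assumes A: "A \<subseteq> CC G Rg" and B: "B \<subseteq> CC G Rg" and AB: "A \<inter> B = {}"
    and F[measurable]: "F \<in> borel_measurable (PiM A (\<lambda>_. borel))"
    and H[measurable]: "H \<in> borel_measurable (PiM B (\<lambda>_. borel))"
    and P: "\<And>\<omega>. P \<omega> = F (restrict (\<lambda>c. S c \<omega>) A)"
    and Q: "\<And>\<omega>. Q \<omega> = H (restrict (\<lambda>c. S c \<omega>) B)"
    and iP: "integrable M P" and iQ: "integrable M Q"
  shows "expectation (\<lambda>\<omega>. P \<omega> * Q \<omega>) = expectation P * expectation Q"
proof -
  have "indep_var (PiM A (\<lambda>_. borel)) (\<lambda>\<omega>. restrict (\<lambda>c. S c \<omega>) A)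
                  (PiM B (\<lambda>_. borel)) (\<lambda>\<omega>. restrict (\<lambda>c. S c \<omega>) B)"
    by (rule indep_var_restrict[OF indS AB A B])
  then have "indep_var borel (F \<circ> (\<lambda>\<omega>. restrict (\<lambda>c. S c \<omega>) A)) borel (H \<circ> (\<lambda>\<omega>. restrict (\<lambda>c. S c \<omega>) B))"
    by (rule indep_var_compose) (auto)
  moreover have "F \<circ> (\<lambda>\<omega>. restrict (\<lambda>c. S c \<omega>) A) = P" "H \<circ> (\<lambda>\<omega>. restrict (\<lambda>c. S c \<omega>) B) = Q"
    using P Q by auto
  ultimately have "indep_var borel P borel Q" by simp
  note * = indep_var_lebesgue_integral[OF this iP iQ]
  show ?thesis by (rule *)
qed

lemma indep_pair:
  fixes f h :: "real \<Rightarrow> real"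
  assumes c: "c \<in> CC G Rg" "d \<in> CC G Rg" "c \<noteq> d"
    and f[measurable]: "f \<in> borel_measurable borel" and h[measurable]: "h \<in> borel_measurable borel"
    and i1: "integrable M (\<lambda>\<omega>. f (S c \<omega>))" and i2: "integrable M (\<lambda>\<omega>. h (S d \<omega>))"
  shows "expectation (\<lambda>\<omega>. f (S c \<omega>) * h (S d \<omega>)) = expectation (\<lambda>\<omega>. f (S c \<omega>)) * expectation (\<lambda>\<omega>. h (S d \<omega>))"
proof (rule indep_sets[where A="{c}" and B="{d}" and F="\<lambda>x. f (x c)" and H="\<lambda>x. h (x d)"])
  show "(\<lambda>x. f (x c)) \<in> borel_measurable (PiM {c} (\<lambda>_. borel))"
    using measurable_component_singleton[of c "{c}" "\<lambda>_. borel"] by measurable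
  show "(\<lambda>x. h (x d)) \<in> borel_measurable (PiM {d} (\<lambda>_. borel))"
    using measurable_component_singleton[of d "{d}" "\<lambda>_. borel"] by measurable
qed (use c i1 i2 in auto)

end



lemma arith_bound:
  fixes R q s X :: real
  assumes R: "R \<ge> 2" and q: "q \<ge> 0" and X: "X \<le> (R * q + R * (R - 1) * s^2) / (R - 1)^2"
  shows "(1 + 1/R)^2 * (X - s^2) \<le> 9 * (q + s^2) / R"
proof -
  have R1: "R - 1 > 0" using R by simp
  have "(R * q + R * (R - 1) * s^2) / (R - 1)^2 - s^2 = R * q / (R-1)^2 + s^2 / (R - 1)"
  proof -
    have a: "R * (R - 1) * s^2 / (R - 1)^2 = R * s^2 / (R - 1)" using R1 by (simp add: power2_eq_square)
    have b: "R * s^2 / (R - 1) - s^2 = s^2 / (R - 1)" using R1 by (simp add: field_simps)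
    show ?thesis using a b by (simp add: add_divide_distrib)
  qed
  moreover have "R * q / (R-1)^2 \<le> 4 * q / R"
  proof -
    have "(3*R-2)*(R-2) \<ge> 0" using R by (intro mult_nonneg_nonneg) auto
    then have "R * R \<le> 4 * (R-1)^2" by (simp add: power2_eq_square algebra_simps)
    then have "R * q * R \<le> 4 * q * (R-1)^2" using q
      by (metis mult.assoc mult.commute mult_left_mono)
    then show ?thesis using R1 R by (simp add: divide_simps)
  qed
  moreover have "s^2 / (R - 1) \<le> 2 * s^2 / R"
    using R R1 mult_right_mono[OF R zero_le_power2[of s]] by (simp add: divide_simps) (simp add: algebra_simps)
  ultimately have 1: "X - s^2 \<le> (4 * q + 2 * s^2) / R" using X by (simp add: add_divide_distrib)
  have 2: "(1 + 1/R)^2 \<le> 9/4"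
  proof -
    have "1/R \<le> 1/2" using R by (simp add: divide_simps)
    then have "1 + 1/R \<le> 3/2" by simp
    then have "(1 + 1/R)^2 \<le> (3/2)^2" using R by (intro power_mono) auto
    then show ?thesis by (simp add: power2_eq_square)
  qed
  have 3: "(4 * q + 2 * s^2) / R \<ge> 0" using q R by simp
  have "(1 + 1/R)^2 * (X - s^2) \<le> (1 + 1/R)^2 * ((4 * q + 2 * s^2) / R)"
    using 1 by (intro mult_left_mono) auto
  also have "\<dots> \<le> 9/4 * ((4 * q + 2 * s^2) / R)" using 2 3 by (intro mult_right_mono) auto
  also have "\<dots> \<le> 9 * (q + s^2) / R" using q R by (simp add: divide_simps)
  finally show ?thesis .
qed

context popn begin

definition mu where "mu g = expectation (S (orig g))"
definition s2 where "s2 g = expectation (\<lambda>\<omega>. (S (orig g) \<omega> - mu g)^2)"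
definition m4 where "m4 g = expectation (\<lambda>\<omega>. (S (orig g) \<omega> - mu g)^4)"
definition Wf where "Wf \<omega> = (\<Sum>g\<in>G. S (orig g) \<omega> - (\<Sum>k<Rg g. S (cp g k) \<omega>) / real (Rg g))"
definition Tg where "Tg g \<omega> = sample_var (Rg g) (\<lambda>k. S (cp g k)) \<omega> * (1 + 1 / real (Rg g))"
definition Sig where "Sig \<omega> = (\<Sum>g\<in>G. Tg g \<omega>)"

lemma LZ: "g \<in> G \<Longrightarrow> c \<in> grpset Rg g \<Longrightarrow> L4 (\<lambda>\<omega>. S c \<omega> - a)"
  by (auto simp: grpset_def intro!: L4_diff L4_const L4o L4c)

lemma intZ: "g \<in> G \<Longrightarrow> c \<in> grpset Rg g \<Longrightarrow> integrable M (\<lambda>\<omega>. S c \<omega> - a)"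
  by (intro L2_int L4_L2 LZ)

lemma intZ2: "g \<in> G \<Longrightarrow> c \<in> grpset Rg g \<Longrightarrow> integrable M (\<lambda>\<omega>. (S c \<omega> - a)^2)"
  using L4_mult[OF LZ[where c=c and a=a] LZ[where c=c and a=a]] by (simp add: power2_eq_square L2_int)

lemma grp_CC: "g \<in> G \<Longrightarrow> c \<in> grpset Rg g \<Longrightarrow> c \<in> CC G Rg"
  using grpset_sub by blast

lemma mom_cp:
  assumes "g \<in> G" "k < Rg g"
  shows "expectation (S (cp g k)) = mu g"
    and "expectation (\<lambda>\<omega>. (S (cp g k) \<omega> - mu g)^2) = s2 g"
    and "expectation (\<lambda>\<omega>. (S (cp g k) \<omega> - mu g)^4) = m4 g"
  using transfer(1)[OF assms, of "\<lambda>x. x"] transfer(1)[OF assms, of "\<lambda>x. (x - mu g)^2"]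
    transfer(1)[OF assms, of "\<lambda>x. (x - mu g)^4"]
  by (auto simp: mu_def s2_def m4_def)

lemma cross1:
  assumes "g \<in> G" "c \<in> grpset Rg g" "d \<in> grpset Rg g" "c \<noteq> d"
    and "expectation (S d) = mu g"
  shows "expectation (\<lambda>\<omega>. (S c \<omega> - mu g) * (S d \<omega> - mu g)) = 0"
proof -
  have "expectation (\<lambda>\<omega>. (S c \<omega> - mu g) * (S d \<omega> - mu g))
     = expectation (\<lambda>\<omega>. S c \<omega> - mu g) * expectation (\<lambda>\<omega>. S d \<omega> - mu g)"
    using assms by (intro indep_pair[where f="\<lambda>x. x - mu g" and h="\<lambda>x. x - mu g"] grp_CC intZ) auto
  also have "expectation (\<lambda>\<omega>. S d \<omega> - mu g) = 0"
    using assms L2_int[OF L4_L2[OF LZ[where c=d and a=0]]] by (simp add: prob_space)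
  finally show ?thesis by simp
qed

lemma cross2:
  assumes "g \<in> G" "k < Rg g" "l < Rg g" "k \<noteq> l"
  shows "expectation (\<lambda>\<omega>. (S (cp g k) \<omega> - mu g)^2 * (S (cp g l) \<omega> - mu g)^2) = s2 g * s2 g"
proof -
  have "expectation (\<lambda>\<omega>. (S (cp g k) \<omega> - mu g)^2 * (S (cp g l) \<omega> - mu g)^2)
     = expectation (\<lambda>\<omega>. (S (cp g k) \<omega> - mu g)^2) * expectation (\<lambda>\<omega>. (S (cp g l) \<omega> - mu g)^2)"
    using assms by (intro indep_pair[where f="\<lambda>x. (x - mu g)^2" and h="\<lambda>x. (x - mu g)^2"] intZ2[of g]) auto
  then show ?thesis using mom_cp assms by simp
qed

lemma grp_stats:
  assumes g: "g \<in> G"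
  shows "L2 (sample_var (Rg g) (\<lambda>k. S (cp g k)))"
    and "expectation (sample_var (Rg g) (\<lambda>k. S (cp g k))) = s2 g"
    and "expectation (\<lambda>\<omega>. (sample_var (Rg g) (\<lambda>k. S (cp g k)) \<omega>)^2)
           \<le> (real (Rg g) * m4 g + real (Rg g) * (real (Rg g) - 1) * (s2 g)^2) / (real (Rg g) - 1)^2"
proof -
  note * = sample_group[of "Rg g" "\<lambda>k. S (cp g k)" "mu g" "s2 g" "m4 g"]
  have h: "2 \<le> Rg g" "\<And>k. k < Rg g \<Longrightarrow> L4 (S (cp g k))"
    "\<And>k. k < Rg g \<Longrightarrow> expectation (S (cp g k)) = mu g"
    "\<And>k. k < Rg g \<Longrightarrow> expectation (\<lambda>\<omega>. (S (cp g k) \<omega> - mu g)^2) = s2 g"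
    "\<And>k. k < Rg g \<Longrightarrow> expectation (\<lambda>\<omega>. (S (cp g k) \<omega> - mu g)^4) = m4 g"
    "\<And>k l. k < Rg g \<Longrightarrow> l < Rg g \<Longrightarrow> k \<noteq> l \<Longrightarrow>
        expectation (\<lambda>\<omega>. (S (cp g k) \<omega> - mu g) * (S (cp g l) \<omega> - mu g)) = 0"
    "\<And>k l. k < Rg g \<Longrightarrow> l < Rg g \<Longrightarrow> k \<noteq> l \<Longrightarrow>
        expectation (\<lambda>\<omega>. (S (cp g k) \<omega> - mu g)^2 * (S (cp g l) \<omega> - mu g)^2) = s2 g * s2 g"
    using g Rg2 L4c mom_cp cross1 cross2 by auto
  show "L2 (sample_var (Rg g) (\<lambda>k. S (cp g k)))"
    and "expectation (sample_var (Rg g) (\<lambda>k. S (cp g k))) = s2 g"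
    and "expectation (\<lambda>\<omega>. (sample_var (Rg g) (\<lambda>k. S (cp g k)) \<omega>)^2)
           \<le> (real (Rg g) * m4 g + real (Rg g) * (real (Rg g) - 1) * (s2 g)^2) / (real (Rg g) - 1)^2"
    using *[OF h] by auto
qed

end



context popn begin

definition V where "V g \<omega> = (S (orig g) \<omega> - mu g) - (\<Sum>k<Rg g. (S (cp g k) \<omega> - mu g)) / real (Rg g)"

lemma LV: "g \<in> G \<Longrightarrow> L4 (V g)"
  unfolding V_def
  by (intro L4_diff L4_scale[where c="1/real (Rg g)", simplified] L4_sum LZ) auto

lemma EZ: "g \<in> G \<Longrightarrow> c \<in> grpset Rg g \<Longrightarrow> expectation (S c) = mu g \<Longrightarrow> expectation (\<lambda>\<omega>. S c \<omega> - mu g) = 0"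
  using L2_int[OF L4_L2[OF LZ[where c=c and a=0]]] by (simp add: prob_space)

lemma EV: assumes g: "g \<in> G" shows "expectation (V g) = 0"
proof -
  have "expectation (V g) = expectation (\<lambda>\<omega>. S (orig g) \<omega> - mu g) - (\<Sum>k<Rg g. expectation (\<lambda>\<omega>. S (cp g k) \<omega> - mu g)) / real (Rg g)"
  proof -
    have i1: "integrable M (\<lambda>\<omega>. S (orig g) \<omega> - mu g)" using g by (intro intZ) auto
    have i2: "integrable M (\<lambda>\<omega>. (\<Sum>k<Rg g. S (cp g k) \<omega> - mu g))"
      using g by (intro Bochner_Integration.integrable_sum intZ) auto
    have i3: "integrable M (\<lambda>\<omega>. (\<Sum>k<Rg g. S (cp g k) \<omega> - mu g) / real (Rg g))"
      using i2 by simp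
    have "expectation (V g) = expectation (\<lambda>\<omega>. S (orig g) \<omega> - mu g) - expectation (\<lambda>\<omega>. (\<Sum>k<Rg g. S (cp g k) \<omega> - mu g) / real (Rg g))"
      unfolding V_def by (rule Bochner_Integration.integral_diff[OF i1 i3])
    also have "expectation (\<lambda>\<omega>. (\<Sum>k<Rg g. S (cp g k) \<omega> - mu g) / real (Rg g))
       = (\<Sum>k<Rg g. expectation (\<lambda>\<omega>. S (cp g k) \<omega> - mu g)) / real (Rg g)"
      using g by (simp add: Bochner_Integration.integral_sum intZ)
    finally show ?thesis .
  qed
  also have "\<dots> = 0"
  proof -
    have "expectation (\<lambda>\<omega>. S (orig g) \<omega> - mu g) = 0" using g by (intro EZ) (auto simp: mu_def)
    moreover have "expectation (\<lambda>\<omega>. S (cp g k) \<omega> - mu g) = 0" if "k < Rg g" for k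
      using g that by (intro EZ) (auto simp: mom_cp)
    ultimately show ?thesis by simp
  qed
  finally show ?thesis .
qed

lemma EV2: assumes g: "g \<in> G" shows "expectation (\<lambda>\<omega>. (V g \<omega>)^2) = s2 g * (1 + 1 / real (Rg g))"
proof -
  define A where "A \<omega> = S (orig g) \<omega> - mu g" for \<omega>
  define B where "B \<omega> = (\<Sum>k<Rg g. (S (cp g k) \<omega> - mu g))" for \<omega>
  define R where "R = real (Rg g)"
  have R0: "R > 0" using Rg2[OF g] by (simp add: R_def)
  have LA: "L4 A" unfolding A_def using g by (intro LZ) auto
  have LB: "L4 B" unfolding B_def using g by (intro L4_sum LZ) auto
  have eq: "(V g \<omega>)^2 = (A \<omega>)^2 + (-2/R) * (A \<omega> * B \<omega>) + (1/R^2) * (B \<omega>)^2" for \<omega>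
    unfolding V_def A_def[symmetric] B_def[symmetric] R_def[symmetric] using R0
    by (simp add: power2_eq_square field_simps)
  have iAA: "integrable M (\<lambda>\<omega>. (A \<omega>)^2)" using L4_mult[OF LA LA] by (simp add: L2_int power2_eq_square)
  have iAB: "integrable M (\<lambda>\<omega>. A \<omega> * B \<omega>)" using L4_mult[OF LA LB] by (simp add: L2_int)
  have iBB: "integrable M (\<lambda>\<omega>. (B \<omega>)^2)" using L4_mult[OF LB LB] by (simp add: L2_int power2_eq_square)
  have EAB: "expectation (\<lambda>\<omega>. A \<omega> * B \<omega>) = 0"
  proof -
    have "expectation (\<lambda>\<omega>. A \<omega> * B \<omega>) = (\<Sum>k<Rg g. expectation (\<lambda>\<omega>. (S (orig g) \<omega> - mu g) * (S (cp g k) \<omega> - mu g)))"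
      unfolding A_def B_def sum_distrib_left using g
      by (intro Bochner_Integration.integral_sum L2_mult_int L4_L2 LZ) auto
    also have "\<dots> = 0" using g by (intro sum.neutral ballI cross1) (auto simp: mom_cp)
    finally show ?thesis .
  qed
  have EBB: "expectation (\<lambda>\<omega>. (B \<omega>)^2) = R * s2 g"
  proof -
    have "expectation (\<lambda>\<omega>. (B \<omega>)^2) = (\<Sum>k<Rg g. expectation (\<lambda>\<omega>. (S (cp g k) \<omega> - mu g)^2))"
      unfolding B_def using g
      by (intro orth_sum_sq L4_L2 LZ cross1) (auto simp: mom_cp)
    also have "\<dots> = R * s2 g" using g by (simp add: mom_cp R_def)
    finally show ?thesis .
  qed
  have "expectation (\<lambda>\<omega>. (V g \<omega>)^2) = expectation (\<lambda>\<omega>. (A \<omega>)^2) + (-2/R) * expectation (\<lambda>\<omega>. A \<omega> * B \<omega>) + (1/R^2) * expectation (\<lambda>\<omega>. (B \<omega>)^2)"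
    unfolding eq using iAA iAB iBB by simp
  also have "\<dots> = s2 g + (-2/R) * 0 + (1/R^2) * (R * s2 g)"
    by (simp only: EAB EBB) (simp add: A_def s2_def)
  also have "\<dots> = s2 g * (1 + 1 / R)" using R0 by (simp add: power2_eq_square field_simps)
  finally show ?thesis by (simp add: R_def)
qed

lemma VV: assumes g: "g \<in> G" "h \<in> G" "g \<noteq> h" shows "expectation (\<lambda>\<omega>. V g \<omega> * V h \<omega>) = 0"
proof -
  have "expectation (\<lambda>\<omega>. V g \<omega> * V h \<omega>) = expectation (V g) * expectation (V h)"
  proof (rule indep_sets[where A="grpset Rg g" and B="grpset Rg h"
        and F="\<lambda>x. (x (orig g) - mu g) - (\<Sum>k<Rg g. (x (cp g k) - mu g)) / real (Rg g)"
        and H="\<lambda>x. (x (orig h) - mu h) - (\<Sum>k<Rg h. (x (cp h k) - mu h)) / real (Rg h)"])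
    show "(\<lambda>x. (x (orig g) - mu g) - (\<Sum>k<Rg g. (x (cp g k) - mu g)) / real (Rg g)) \<in> borel_measurable (PiM (grpset Rg g) (\<lambda>_. borel))"
      by measurable
    show "(\<lambda>x. (x (orig h) - mu h) - (\<Sum>k<Rg h. (x (cp h k) - mu h)) / real (Rg h)) \<in> borel_measurable (PiM (grpset Rg h) (\<lambda>_. borel))"
      by measurable
  qed (use g L2_int[OF L4_L2[OF LV[unfolded V_def]]] in \<open>auto simp: grpset_sub grpset_disj V_def\<close>)
  then show ?thesis using g by (simp add: EV)
qed

lemma W_eq: "Wf \<omega> = (\<Sum>g\<in>G. V g \<omega>)"
  unfolding Wf_def V_def
proof (intro sum.cong refl)
  fix g assume "g \<in> G"
  have R0: "real (Rg g) > 0" using Rg2[OF \<open>g \<in> G\<close>] by simp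
  have "(\<Sum>k<Rg g. (S (cp g k) \<omega> - mu g)) = (\<Sum>k<Rg g. S (cp g k) \<omega>) - real (Rg g) * mu g"
    by (simp add: sum_subtractf)
  then show "S (orig g) \<omega> - (\<Sum>k<Rg g. S (cp g k) \<omega>) / real (Rg g) =
         S (orig g) \<omega> - mu g - (\<Sum>k<Rg g. S (cp g k) \<omega> - mu g) / real (Rg g)"
    using R0 by (simp add: field_simps)
qed

theorem var_W: "expectation (\<lambda>\<omega>. (Wf \<omega> - expectation Wf)^2) = (\<Sum>g\<in>G. s2 g * (1 + 1 / real (Rg g)))"
proof -
  have "expectation Wf = 0"
    unfolding W_eq using finG LV
    by (simp add: Bochner_Integration.integral_sum L2_int L4_L2 EV)
  then have "expectation (\<lambda>\<omega>. (Wf \<omega> - expectation Wf)^2) = expectation (\<lambda>\<omega>. (\<Sum>g\<in>G. V g \<omega>)^2)"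
    by (simp add: W_eq)
  also have "\<dots> = (\<Sum>g\<in>G. expectation (\<lambda>\<omega>. (V g \<omega>)^2))"
    using finG by (intro orth_sum_sq L4_L2 LV VV) auto
  also have "\<dots> = (\<Sum>g\<in>G. s2 g * (1 + 1 / real (Rg g)))" by (intro sum.cong refl EV2)
  finally show ?thesis .
qed

end



context popn begin

definition eT where "eT g = s2 g * (1 + 1 / real (Rg g))"

lemma LT: "g \<in> G \<Longrightarrow> L2 (Tg g)"
  unfolding Tg_def using grp_stats(1) by (subst mult.commute) (intro L2_scale)

lemma ET: "g \<in> G \<Longrightarrow> expectation (Tg g) = eT g"
  unfolding Tg_def eT_def using grp_stats(2) by simp

lemma m4_nonneg: "m4 g \<ge> 0"
  unfolding m4_def by (intro Bochner_Integration.integral_nonneg) (simp add: zero_le_even_power)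

lemma ET2: assumes g: "g \<in> G"
  shows "expectation (\<lambda>\<omega>. (Tg g \<omega> - eT g)^2) \<le> 9 * (m4 g + (s2 g)^2) / real (Rg g)"
proof -
  define sv where "sv = sample_var (Rg g) (\<lambda>k. S (cp g k))"
  define c where "c = 1 + 1 / real (Rg g)"
  have L: "L2 sv" and E: "expectation sv = s2 g" using grp_stats[OF g] by (auto simp: sv_def)
  have i2: "integrable M (\<lambda>\<omega>. (sv \<omega>)^2)" using L by (simp add: L2_def)
  have i1: "integrable M sv" using L by (rule L2_int)
  have eq: "(Tg g \<omega> - eT g)^2 = c^2 * ((sv \<omega>)^2 + (-2 * s2 g) * sv \<omega> + (s2 g)^2)" for \<omega>
    unfolding Tg_def eT_def sv_def[symmetric] c_def[symmetric] by (simp add: power2_eq_square algebra_simps)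
  have "expectation (\<lambda>\<omega>. (Tg g \<omega> - eT g)^2) = c^2 * (expectation (\<lambda>\<omega>. (sv \<omega>)^2) + (-2 * s2 g) * expectation sv + (s2 g)^2)"
    unfolding eq using i1 i2 by (simp add: prob_space)
  also have "\<dots> = c^2 * (expectation (\<lambda>\<omega>. (sv \<omega>)^2) - (s2 g)^2)" by (simp add: E power2_eq_square)
  also have "\<dots> \<le> 9 * (m4 g + (s2 g)^2) / real (Rg g)"
    unfolding c_def using Rg2[OF g] m4_nonneg grp_stats(3)[OF g]
    by (intro arith_bound) (auto simp: sv_def)
  finally show ?thesis .
qed

lemma sv_meas: "(\<lambda>x. sample_var (Rg g) (\<lambda>k _. x (cp g k)) u) \<in> borel_measurable (PiM (grpset Rg g) (\<lambda>_. borel))"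
  unfolding sample_var_def sample_mean_def by measurable

lemma TT: assumes g: "g \<in> G" "h \<in> G" "g \<noteq> h"
  shows "expectation (\<lambda>\<omega>. (Tg g \<omega> - eT g) * (Tg h \<omega> - eT h)) = 0"
proof -
  have "expectation (\<lambda>\<omega>. (Tg g \<omega> - eT g) * (Tg h \<omega> - eT h))
      = expectation (\<lambda>\<omega>. Tg g \<omega> - eT g) * expectation (\<lambda>\<omega>. Tg h \<omega> - eT h)"
  proof (rule indep_sets[where A="grpset Rg g" and B="grpset Rg h"
        and F="\<lambda>x. sample_var (Rg g) (\<lambda>k _. x (cp g k)) undefined * (1 + 1 / real (Rg g)) - eT g"
        and H="\<lambda>x. sample_var (Rg h) (\<lambda>k _. x (cp h k)) undefined * (1 + 1 / real (Rg h)) - eT h"])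
    show "(\<lambda>x. sample_var (Rg g) (\<lambda>k _. x (cp g k)) undefined * (1 + 1 / real (Rg g)) - eT g) \<in> borel_measurable (PiM (grpset Rg g) (\<lambda>_. borel))"
      using sv_meas by measurable
    show "(\<lambda>x. sample_var (Rg h) (\<lambda>k _. x (cp h k)) undefined * (1 + 1 / real (Rg h)) - eT h) \<in> borel_measurable (PiM (grpset Rg h) (\<lambda>_. borel))"
      using sv_meas by measurable
    show "Tg g \<omega> - eT g = sample_var (Rg g) (\<lambda>k _. restrict (\<lambda>c. S c \<omega>) (grpset Rg g) (cp g k)) undefined * (1 + 1 / real (Rg g)) - eT g" for \<omega>
      unfolding Tg_def by (subst sample_var_cong[where f'="\<lambda>k _. restrict (\<lambda>c. S c \<omega>) (grpset Rg g) (cp g k)" and \<omega>'=undefined]) auto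
    show "Tg h \<omega> - eT h = sample_var (Rg h) (\<lambda>k _. restrict (\<lambda>c. S c \<omega>) (grpset Rg h) (cp h k)) undefined * (1 + 1 / real (Rg h)) - eT h" for \<omega>
      unfolding Tg_def by (subst sample_var_cong[where f'="\<lambda>k _. restrict (\<lambda>c. S c \<omega>) (grpset Rg h) (cp h k)" and \<omega>'=undefined]) auto
  qed (use g L2_int[OF L2_diff[OF LT L2_const]] in \<open>auto simp: grpset_sub grpset_disj\<close>)
  then show ?thesis using g L2_int[OF LT] by (simp add: ET prob_space)
qed

lemma L2Sig: "L2 Sig"
  unfolding Sig_def using finG by (intro L2_sum LT) auto

lemma ESig: "expectation Sig = (\<Sum>g\<in>G. s2 g * (1 + 1 / real (Rg g)))"
  unfolding Sig_def using finG L2_int[OF LT]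
  by (simp add: Bochner_Integration.integral_sum ET eT_def)

theorem var_Sig: "expectation (\<lambda>\<omega>. (Sig \<omega> - expectation Sig)^2) \<le> (\<Sum>g\<in>G. 9 * (m4 g + (s2 g)^2) / real (Rg g))"
proof -
  have "Sig \<omega> - expectation Sig = (\<Sum>g\<in>G. Tg g \<omega> - eT g)" for \<omega>
    unfolding ESig Sig_def eT_def by (simp add: sum_subtractf)
  then have "expectation (\<lambda>\<omega>. (Sig \<omega> - expectation Sig)^2) = expectation (\<lambda>\<omega>. (\<Sum>g\<in>G. Tg g \<omega> - eT g)^2)"
    by simp
  also have "\<dots> = (\<Sum>g\<in>G. expectation (\<lambda>\<omega>. (Tg g \<omega> - eT g)^2))"
    using finG by (intro orth_sum_sq L2_diff LT L2_const TT) auto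
  also have "\<dots> \<le> (\<Sum>g\<in>G. 9 * (m4 g + (s2 g)^2) / real (Rg g))"
    by (intro sum_mono ET2)
  finally show ?thesis .
qed

end



definition Sfun :: "nat set \<Rightarrow> (nat \<Rightarrow> 'a \<Rightarrow> real) \<Rightarrow> (nat \<Rightarrow> nat \<Rightarrow> 'a \<Rightarrow> real) \<Rightarrow> (nat \<Rightarrow> nat \<Rightarrow> 'a \<Rightarrow> real) \<Rightarrow> comp \<Rightarrow> 'a \<Rightarrow> real" where
  "Sfun D X Xs XsD c \<omega> = (case c of OrigInd i \<Rightarrow> X i \<omega> | OrigBlock \<Rightarrow> XD_tot D X \<omega>
     | SimInd i k \<Rightarrow> Xs i k \<omega> | SimBlock k \<Rightarrow> XD_tot D (XsD k) \<omega>)"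

definition Rgf :: "(nat \<Rightarrow> nat) \<Rightarrow> nat \<Rightarrow> nat option \<Rightarrow> nat" where
  "Rgf R RD g = (case g of None \<Rightarrow> RD | Some i \<Rightarrow> R i)"

definition c4 :: "'a measure \<Rightarrow> ('a \<Rightarrow> real) \<Rightarrow> real" where
  "c4 M Y = integral\<^sup>L M (\<lambda>\<omega>. (Y \<omega> - mean M Y)^4)"

lemma sum_comp_meas: "finite J \<Longrightarrow> (\<lambda>x::nat \<Rightarrow> real. \<Sum>j\<in>J. x j) \<in> borel_measurable (PiM J (\<lambda>_. borel))"
  by (rule borel_measurable_sum) (rule measurable_component_singleton)

lemma Sfun_simps[simp]:
  "Sfun D X Xs XsD (OrigInd i) = X i" "Sfun D X Xs XsD OrigBlock = XD_tot D X"
  "Sfun D X Xs XsD (SimInd i k) = Xs i k" "Sfun D X Xs XsD (SimBlock k) = XD_tot D (XsD k)"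
  by (auto simp: fun_eq_iff Sfun_def)

lemma comps_CC: "comps I R RD = CC (insert None (Some ` I)) (Rgf R RD)"
proof
  show "comps I R RD \<subseteq> CC (insert None (Some ` I)) (Rgf R RD)"
  proof
    fix c assume "c \<in> comps I R RD"
    then show "c \<in> CC (insert None (Some ` I)) (Rgf R RD)"
    proof (auto simp: comps_def)
      fix i assume "i \<in> I" then show "OrigInd i \<in> CC (insert None (Some ` I)) (Rgf R RD)"
        using orig_CC[of "Some i" "insert None (Some ` I)" "Rgf R RD"] by simp
    next
      show "OrigBlock \<in> CC (insert None (Some ` I)) (Rgf R RD)"
        using orig_CC[of "None" "insert None (Some ` I)" "Rgf R RD"] by simp
    next
      fix i k assume "i \<in> I" "k < R i" then show "SimInd i k \<in> CC (insert None (Some ` I)) (Rgf R RD)"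
        using cp_CC[of "Some i" "insert None (Some ` I)" k "Rgf R RD"] by (simp add: Rgf_def)
    next
      fix k assume "k < RD" then show "SimBlock k \<in> CC (insert None (Some ` I)) (Rgf R RD)"
        using cp_CC[of "None" "insert None (Some ` I)" k "Rgf R RD"] by (simp add: Rgf_def)
    qed
  qed
  show "CC (insert None (Some ` I)) (Rgf R RD) \<subseteq> comps I R RD"
    by (auto simp: CC_def comps_def Rgf_def)
qed

lemma per_n:
  fixes M :: "'a measure" and I D :: "nat set" and X :: "nat \<Rightarrow> 'a \<Rightarrow> real"
    and Xs XsD :: "nat \<Rightarrow> nat \<Rightarrow> 'a \<Rightarrow> real" and R :: "nat \<Rightarrow> nat" and RD :: nat
  assumes prob: "prob_space M"
    and fin: "finite I" "finite D"
    and meas: "\<And>i. i \<in> I \<union> D \<Longrightarrow> X i \<in> borel_measurable M"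
    and fourth: "\<And>i. i \<in> I \<union> D \<Longrightarrow> integrable M (\<lambda>\<omega>. (X i \<omega>)^4)"
    and simD_meas: "\<And>k j. k < RD \<Longrightarrow> j \<in> D \<Longrightarrow> XsD k j \<in> borel_measurable M"
    and sim_distr: "\<And>i k. i \<in> I \<Longrightarrow> k < R i \<Longrightarrow> distr M borel (Xs i k) = distr M borel (X i)"
    and simD_distr: "\<And>k. k < RD \<Longrightarrow>
          distr M (PiM D (\<lambda>_. borel)) (\<lambda>\<omega>. restrict (\<lambda>j. XsD k j \<omega>) D)
        = distr M (PiM D (\<lambda>_. borel)) (\<lambda>\<omega>. restrict (\<lambda>j. X j \<omega>) D)"
    and indep: "prob_space.indep_vars M (\<lambda>c. PiM (coords D c) (\<lambda>_. borel)) (compvar D X Xs XsD) (comps I R RD)"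
    and R1: "\<And>i. i \<in> I \<Longrightarrow> R i \<ge> 2"
    and RD2: "RD \<ge> 2"
  shows "mean M (sigma2_hat I D R RD Xs XsD) = var M (\<lambda>\<omega>. X_tot I D X \<omega> - mu_hat I D R RD Xs XsD \<omega>)"
    and "var M (\<lambda>\<omega>. X_tot I D X \<omega> - mu_hat I D R RD Xs XsD \<omega>)
          = (\<Sum>i\<in>I. var M (X i) * (1 + 1 / real (R i))) + var M (XD_tot D X) * (1 + 1 / real RD)"
    and "sigma2_hat I D R RD Xs XsD \<in> borel_measurable M"
    and "integrable M (\<lambda>\<omega>. (sigma2_hat I D R RD Xs XsD \<omega>)^2)"
    and "integral\<^sup>L M (\<lambda>\<omega>. (sigma2_hat I D R RD Xs XsD \<omega> - mean M (sigma2_hat I D R RD Xs XsD))^2)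
          \<le> (\<Sum>i\<in>I. 9 * (c4 M (X i) + (var M (X i))^2) / real (R i))
             + 9 * (c4 M (XD_tot D X) + (var M (XD_tot D X))^2) / real RD"
proof -
  interpret P: prob_space M by (rule prob)
  define G where "G = insert None (Some ` I)"
  define Rg where "Rg = Rgf R RD"
  define S where "S = Sfun D X Xs XsD"
  have CCeq: "comps I R RD = CC G Rg" unfolding G_def Rg_def by (rule comps_CC)
  have ind1: "P.indep_vars (\<lambda>_. borel) (\<lambda>c \<omega>. (\<lambda>x. \<Sum>j\<in>coords D c. x j) (compvar D X Xs XsD c \<omega>)) (comps I R RD)"
  proof (rule P.indep_vars_compose2[OF indep])
    fix c show "(\<lambda>x::nat \<Rightarrow> real. \<Sum>j\<in>coords D c. x j) \<in> borel_measurable (PiM (coords D c) (\<lambda>_. borel))"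
      using fin by (intro sum_comp_meas) (auto simp: coords_def split: comp.split)
  qed
  have indS: "P.indep_vars (\<lambda>_. borel) S (CC G Rg)"
    unfolding CCeq[symmetric]
  proof (rule P.indep_vars_cong[THEN iffD1, OF refl _ refl ind1])
    fix c assume "c \<in> comps I R RD"
    show "(\<lambda>\<omega>. \<Sum>j\<in>coords D c. compvar D X Xs XsD c \<omega> j) = S c"
      by (rule ext) (auto simp: S_def Sfun_def coords_def compvar_def XD_tot_def split: comp.split)
  qed
  have L4X: "P.L4 (X i)" if "i \<in> I \<union> D" for i using meas fourth that by (simp add: P.L4_def)
  have L4o: "P.L4 (S (orig g))" if "g \<in> G" for g
  proof (cases g)
    case None
    have "P.L4 (\<lambda>\<omega>. \<Sum>j\<in>D. X j \<omega>)" using fin by (intro P.L4_sum L4X) auto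
    then show ?thesis using None by (simp add: S_def XD_tot_def[abs_def])
  next
    case (Some i) then show ?thesis using that L4X[of i] by (auto simp: S_def Sfun_def G_def)
  qed
  have Rg2: "2 \<le> Rg g" if "g \<in> G" for g using that R1 RD2 by (auto simp: Rg_def Rgf_def G_def)
  have dist: "distr M borel (S (cp g k)) = distr M borel (S (orig g))" if "g \<in> G" "k < Rg g" for g k
  proof (cases g)
    case None
    have k: "k < RD" using that None by (simp add: Rg_def Rgf_def)
    have sm: "(\<lambda>x::nat \<Rightarrow> real. \<Sum>j\<in>D. x j) \<in> borel_measurable (PiM D (\<lambda>_. borel))" using fin(2) by (rule sum_comp_meas)
    have m1: "(\<lambda>\<omega>. restrict (\<lambda>j. XsD k j \<omega>) D) \<in> measurable M (PiM D (\<lambda>_. borel))"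
      using simD_meas[OF k] by (intro measurable_restrict) auto
    have m2: "(\<lambda>\<omega>. restrict (\<lambda>j. X j \<omega>) D) \<in> measurable M (PiM D (\<lambda>_. borel))"
      using meas by (intro measurable_restrict) auto
    have e1: "S (cp g k) = (\<lambda>x. \<Sum>j\<in>D. x j) \<circ> (\<lambda>\<omega>. restrict (\<lambda>j. XsD k j \<omega>) D)"
      using None by (auto simp: S_def Sfun_def XD_tot_def fun_eq_iff)
    have e2: "S (orig g) = (\<lambda>x. \<Sum>j\<in>D. x j) \<circ> (\<lambda>\<omega>. restrict (\<lambda>j. X j \<omega>) D)"
      using None by (auto simp: S_def Sfun_def XD_tot_def fun_eq_iff)
    show ?thesis unfolding e1 e2
      using distr_distr[OF sm m1, symmetric] distr_distr[OF sm m2, symmetric] simD_distr[OF k] by simp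
  next
    case (Some i) then show ?thesis using that sim_distr
      by (auto simp: S_def Sfun_def G_def Rg_def Rgf_def)
  qed
  have finG: "finite G" using fin by (simp add: G_def)
  interpret Q: popn M G Rg S
    by (intro popn.intro prob popn_axioms.intro finG indS L4o Rg2 dist)
  have NG: "None \<notin> Some ` I" by auto
  have sumG: "(\<Sum>g\<in>G. f g) = f None + (\<Sum>i\<in>I. f (Some i))" for f :: "nat option \<Rightarrow> real"
    unfolding G_def using fin NG by (simp add: sum.reindex)
  have sig: "sigma2_hat I D R RD Xs XsD = Q.Sig"
  proof
    fix \<omega>
    have "Q.Sig \<omega> = Q.Tg None \<omega> + (\<Sum>i\<in>I. Q.Tg (Some i) \<omega>)"
      unfolding Q.Sig_def by (rule sumG)
    also have "\<dots> = sigma2_hat I D R RD Xs XsD \<omega>"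
      unfolding Q.Tg_def sigma2_hat_def by (simp add: S_def Sfun_def Rg_def Rgf_def)
    finally show "sigma2_hat I D R RD Xs XsD \<omega> = Q.Sig \<omega>" ..
  qed
  have wf: "(\<lambda>\<omega>. X_tot I D X \<omega> - mu_hat I D R RD Xs XsD \<omega>) = Q.Wf"
  proof
    fix \<omega>
    have "Q.Wf \<omega> = (XD_tot D X \<omega> - (\<Sum>k<RD. XD_tot D (XsD k) \<omega>) / real RD)
       + (\<Sum>i\<in>I. X i \<omega> - (\<Sum>k<R i. Xs i k \<omega>) / real (R i))"
      unfolding Q.Wf_def sumG by (simp add: S_def Rg_def Rgf_def)
    also have "\<dots> = X_tot I D X \<omega> - mu_hat I D R RD Xs XsD \<omega>"
      unfolding X_tot_def mu_hat_def sample_mean_def by (simp add: sum_subtractf)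
    finally show "X_tot I D X \<omega> - mu_hat I D R RD Xs XsD \<omega> = Q.Wf \<omega>" ..
  qed
  have s2eq: "Q.s2 (Some i) = var M (X i)" "Q.s2 None = var M (XD_tot D X)" for i
    unfolding Q.s2_def Q.mu_def by (simp_all add: var_def mean_def S_def)
  have m4eq: "Q.m4 (Some i) = c4 M (X i)" "Q.m4 None = c4 M (XD_tot D X)" for i
    unfolding Q.m4_def Q.mu_def by (simp_all add: c4_def mean_def S_def)
  have vW: "var M (\<lambda>\<omega>. X_tot I D X \<omega> - mu_hat I D R RD Xs XsD \<omega>) = (\<Sum>g\<in>G. Q.s2 g * (1 + 1 / real (Rg g)))"
    unfolding wf var_def mean_def by (rule Q.var_W)
  show "mean M (sigma2_hat I D R RD Xs XsD) = var M (\<lambda>\<omega>. X_tot I D X \<omega> - mu_hat I D R RD Xs XsD \<omega>)"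
    unfolding vW sig mean_def by (rule Q.ESig)
  show "var M (\<lambda>\<omega>. X_tot I D X \<omega> - mu_hat I D R RD Xs XsD \<omega>)
          = (\<Sum>i\<in>I. var M (X i) * (1 + 1 / real (R i))) + var M (XD_tot D X) * (1 + 1 / real RD)"
    unfolding vW sumG by (simp add: s2eq Rg_def Rgf_def)
  show "sigma2_hat I D R RD Xs XsD \<in> borel_measurable M"
    "integrable M (\<lambda>\<omega>. (sigma2_hat I D R RD Xs XsD \<omega>)^2)"
    using Q.L2Sig unfolding sig by (simp_all add: P.L2_def)
  have "integral\<^sup>L M (\<lambda>\<omega>. (sigma2_hat I D R RD Xs XsD \<omega> - mean M (sigma2_hat I D R RD Xs XsD))^2)
      \<le> (\<Sum>g\<in>G. 9 * (Q.m4 g + (Q.s2 g)^2) / real (Rg g))"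
    unfolding sig mean_def by (rule Q.var_Sig)
  also have "\<dots> = (\<Sum>i\<in>I. 9 * (c4 M (X i) + (var M (X i))^2) / real (R i))
             + 9 * (c4 M (XD_tot D X) + (var M (XD_tot D X))^2) / real RD"
    unfolding sumG by (simp add: s2eq m4eq Rg_def Rgf_def)
  finally show "integral\<^sup>L M (\<lambda>\<omega>. (sigma2_hat I D R RD Xs XsD \<omega> - mean M (sigma2_hat I D R RD Xs XsD))^2)
          \<le> (\<Sum>i\<in>I. 9 * (c4 M (X i) + (var M (X i))^2) / real (R i))
             + 9 * (c4 M (XD_tot D X) + (var M (XD_tot D X))^2) / real RD" .
qed




lemma block_term:
  fixes B g :: "nat \<Rightarrow> real" and RD :: "nat \<Rightarrow> nat"
  assumes B0: "\<And>n. B n \<ge> 0" and gpos: "eventually (\<lambda>n. g n > 0) sequentially"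
    and RD2: "\<And>n. RD n \<ge> 2"
    and bl: "B \<in> o(g) \<or> (B \<in> O(g) \<and> filterlim RD at_top sequentially)"
  shows "(\<lambda>n. B n / (real (RD n) * g n)) \<longlonglongrightarrow> 0"
  using bl
proof
  assume "B \<in> o(g)"
  then have lim: "(\<lambda>n. B n / g n) \<longlonglongrightarrow> 0" by (rule smalloD_tendsto)
  show ?thesis
  proof (rule tendsto_sandwich[OF _ _ tendsto_const lim])
    show "eventually (\<lambda>n. 0 \<le> B n / (real (RD n) * g n)) sequentially"
      using gpos by eventually_elim (use B0 in auto)
    show "eventually (\<lambda>n. B n / (real (RD n) * g n) \<le> B n / g n) sequentially"
      using gpos
    proof eventually_elim
      case (elim n)
      have "1 * g n \<le> real (RD n) * g n" using RD2[of n] elim by (intro mult_right_mono) auto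
      then show ?case using B0[of n] elim by (intro divide_left_mono) auto
    qed
  qed
next
  assume a: "B \<in> O(g) \<and> filterlim RD at_top sequentially"
  then obtain c where c: "c > 0" "eventually (\<lambda>n. norm (B n) \<le> c * norm (g n)) sequentially"
    by (auto elim: landau_o.bigE)
  have "filterlim (\<lambda>n. real (RD n)) at_top sequentially"
    using a filterlim_real_sequentially by (auto intro: filterlim_compose)
  then have lim: "(\<lambda>n. c / real (RD n)) \<longlonglongrightarrow> 0"
    by (intro tendsto_divide_0[OF tendsto_const] filterlim_at_top_imp_at_infinity)
  show ?thesis
  proof (rule tendsto_sandwich[OF _ _ tendsto_const lim])
    show "eventually (\<lambda>n. 0 \<le> B n / (real (RD n) * g n)) sequentially"
      using gpos by eventually_elim (use B0 in auto)
    show "eventually (\<lambda>n. B n / (real (RD n) * g n) \<le> c / real (RD n)) sequentially"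
      using gpos c(2)
    proof eventually_elim
      case (elim n)
      have R: "real (RD n) > 0" using RD2[of n] by simp
      have "B n \<le> c * g n" using elim B0[of n] by simp
      then have "B n / (real (RD n) * g n) \<le> c * g n / (real (RD n) * g n)"
        using R elim by (intro divide_right_mono) auto
      also have "\<dots> = c / real (RD n)" using elim R by simp
      finally show ?case .
    qed
  qed
qed

lemma final_arith:
  fixes P Q V A B c sb e K C RD :: real
  assumes P: "P \<le> Q / (e * V)^2" and e: "e > 0" and c: "c > 0" and sb: "sb > 0"
    and AV: "c * sb \<le> V" and Q0: "0 \<le> Q" and RD: "RD > 0"
    and Q: "Q \<le> 9/2 * (K + 1) * (C + 1) * c * sb^2 + 9 * B / RD"
  shows "P \<le> 9/2 * (K + 1) * (C + 1) / (e^2 * c) + 9 / e^2 * (B / (RD * (sb^2 * c^2)))"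
proof -
  have A: "c * sb > 0" using c sb by simp
  have "(e * (c * sb))^2 \<le> (e * V)^2" using A AV e by (intro power_mono mult_left_mono) auto
  moreover have "(e * (c * sb))^2 > 0" using c sb e by simp
  moreover have "(e * V)^2 > 0" using A AV e by simp
  ultimately have "Q / (e * V)^2 \<le> Q / (e * (c * sb))^2" using Q0 by (intro divide_left_mono mult_pos_pos) auto
  also have "\<dots> \<le> (9/2 * (K + 1) * (C + 1) * c * sb^2 + 9 * B / RD) / (e * (c * sb))^2"
    using Q \<open>(e * (c * sb))^2 > 0\<close> by (intro divide_right_mono) auto
  also have "\<dots> = 9/2 * (K + 1) * (C + 1) / (e^2 * c) + 9 / e^2 * (B / (RD * (sb^2 * c^2)))"
    using e c sb RD by (simp add: field_simps power2_eq_square)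
  finally show ?thesis using P by simp
qed




theorem lemma3:
  fixes M :: "nat \<Rightarrow> 'a measure"
    and I D :: "nat \<Rightarrow> nat set"
    and X :: "nat \<Rightarrow> nat \<Rightarrow> 'a \<Rightarrow> real"
    and Xs :: "nat \<Rightarrow> nat \<Rightarrow> nat \<Rightarrow> 'a \<Rightarrow> real"
    and XsD :: "nat \<Rightarrow> nat \<Rightarrow> nat \<Rightarrow> 'a \<Rightarrow> real"
    and R :: "nat \<Rightarrow> nat \<Rightarrow> nat"
    and RD :: "nat \<Rightarrow> nat"
  assumes prob: "\<And>n. prob_space (M n)"
    and fin: "\<And>n. finite (I n)" "\<And>n. finite (D n)" "\<And>n. I n \<inter> D n = {}"
    and card_inf: "filterlim (\<lambda>n. card (I n)) at_top sequentially"
    and meas: "\<And>n i. i \<in> I n \<union> D n \<Longrightarrow> X n i \<in> borel_measurable (M n)"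
    and fourth: "\<And>n i. i \<in> I n \<union> D n \<Longrightarrow> integrable (M n) (\<lambda>\<omega>. (X n i \<omega>)^4)"
    and var_pos: "\<And>n i. i \<in> I n \<union> D n \<Longrightarrow> var (M n) (X n i) > 0"
    and varD_pos: "\<And>n. var (M n) (XD_tot (D n) (X n)) > 0"
    and sim_meas: "\<And>n i k. i \<in> I n \<Longrightarrow> k < R n i \<Longrightarrow> Xs n i k \<in> borel_measurable (M n)"
    and simD_meas: "\<And>n k j. k < RD n \<Longrightarrow> j \<in> D n \<Longrightarrow> XsD n k j \<in> borel_measurable (M n)"
    and sim_distr: "\<And>n i k. i \<in> I n \<Longrightarrow> k < R n i \<Longrightarrow>
          distr (M n) borel (Xs n i k) = distr (M n) borel (X n i)"
    and simD_distr: "\<And>n k. k < RD n \<Longrightarrow>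
          distr (M n) (PiM (D n) (\<lambda>_. borel)) (\<lambda>\<omega>. restrict (\<lambda>j. XsD n k j \<omega>) (D n))
        = distr (M n) (PiM (D n) (\<lambda>_. borel)) (\<lambda>\<omega>. restrict (\<lambda>j. X n j \<omega>) (D n))"
    and indep: "\<And>n. prob_space.indep_vars (M n)
          (\<lambda>c. PiM (coords (D n) c) (\<lambda>_. borel)) (compvar (D n) (X n) (Xs n) (XsD n))
          (comps (I n) (R n) (RD n))"
    and R1: "\<And>n i. i \<in> I n \<Longrightarrow> R n i \<ge> 2"
    and RD2: "\<And>n. RD n \<ge> 2"
    and R2: "\<exists>\<kappa>max. \<forall>n. \<forall>i\<in>I n. kurt (M n) (X n i) \<le> \<kappa>max"
    and R3: "\<exists>C. eventually (\<lambda>n. \<bar>gamma2 (M n) (I n) (X n)\<bar> \<le> C) sequentially"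
    and block: "(\<lambda>n. (var (M n) (XD_tot (D n) (X n)))^2 * (kurt (M n) (XD_tot (D n) (X n)) + 1))
                  \<in> o(\<lambda>n. (sigma_bar2 (M n) (I n) (X n))^2 * (real (card (I n)))^2)
             \<or> ((\<lambda>n. (var (M n) (XD_tot (D n) (X n)))^2 * (kurt (M n) (XD_tot (D n) (X n)) + 1))
                  \<in> O(\<lambda>n. (sigma_bar2 (M n) (I n) (X n))^2 * (real (card (I n)))^2)
                \<and> filterlim RD at_top sequentially)"
  shows "(\<forall>n. mean (M n) (sigma2_hat (I n) (D n) (R n) (RD n) (Xs n) (XsD n))
              = var (M n) (\<lambda>\<omega>. X_tot (I n) (D n) (X n) \<omega>
                                 - mu_hat (I n) (D n) (R n) (RD n) (Xs n) (XsD n) \<omega>))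
       \<and> (\<forall>\<epsilon>>0. (\<lambda>n. measure (M n) {\<omega> \<in> space (M n).
              \<bar>sigma2_hat (I n) (D n) (R n) (RD n) (Xs n) (XsD n) \<omega>
               / var (M n) (\<lambda>\<omega>. X_tot (I n) (D n) (X n) \<omega>
                                 - mu_hat (I n) (D n) (R n) (RD n) (Xs n) (XsD n) \<omega>) - 1\<bar> > \<epsilon>})
            \<longlonglongrightarrow> 0)"
proof -
  let ?sh = "\<lambda>n. sigma2_hat (I n) (D n) (R n) (RD n) (Xs n) (XsD n)"
  let ?V = "\<lambda>n. var (M n) (\<lambda>\<omega>. X_tot (I n) (D n) (X n) \<omega> - mu_hat (I n) (D n) (R n) (RD n) (Xs n) (XsD n) \<omega>)"
  let ?Q = "\<lambda>n. (\<Sum>i\<in>I n. 9 * (c4 (M n) (X n i) + (var (M n) (X n i))^2) / real (R n i))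
             + 9 * (c4 (M n) (XD_tot (D n) (X n)) + (var (M n) (XD_tot (D n) (X n)))^2) / real (RD n)"
  have pn: "mean (M n) (?sh n) = ?V n
     \<and> ?V n = (\<Sum>i\<in>I n. var (M n) (X n i) * (1 + 1 / real (R n i))) + var (M n) (XD_tot (D n) (X n)) * (1 + 1 / real (RD n))
     \<and> ?sh n \<in> borel_measurable (M n)
     \<and> integrable (M n) (\<lambda>\<omega>. (?sh n \<omega>)^2)
     \<and> integral\<^sup>L (M n) (\<lambda>\<omega>. (?sh n \<omega> - mean (M n) (?sh n))^2) \<le> ?Q n" for n
    using per_n[OF prob[where n=n] fin(1)[where n=n] fin(2)[where n=n] meas[where n=n] fourth[where n=n]
        simD_meas[where n=n] sim_distr[where n=n] simD_distr[where n=n] indep[where n=n] R1[where n=n] RD2[where n=n]]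
    by blast
  show ?thesis
  proof
    show "\<forall>n. mean (M n) (?sh n) = ?V n" using pn by blast
  next
    show "\<forall>\<epsilon>>0. (\<lambda>n. measure (M n) {\<omega> \<in> space (M n). \<bar>?sh n \<omega> / ?V n - 1\<bar> > \<epsilon>}) \<longlonglongrightarrow> 0"
    proof (intro allI impI)
      fix \<epsilon> :: real assume \<epsilon>: "\<epsilon> > 0"
      obtain K where K: "\<forall>n. \<forall>i\<in>I n. kurt (M n) (X n i) \<le> K" using R2 by blast
      obtain C where C: "eventually (\<lambda>n. \<bar>gamma2 (M n) (I n) (X n)\<bar> \<le> C) sequentially" using R3 by blast
      define K' where "K' = \<bar>K\<bar>"
      define C' where "C' = \<bar>C\<bar>"
      define sb where "sb n = sigma_bar2 (M n) (I n) (X n)" for n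
      define B where "B n = (var (M n) (XD_tot (D n) (X n)))^2 * (kurt (M n) (XD_tot (D n) (X n)) + 1)" for n
      define gg where "gg n = (sb n)^2 * (real (card (I n)))^2" for n
      define bnd where "bnd n = 9/2 * (K' + 1) * (C' + 1) / (\<epsilon>^2 * real (card (I n)))
          + 9 / \<epsilon>^2 * (B n / (real (RD n) * gg n))" for n
      have c4_nonneg: "c4 N Y \<ge> 0" for N :: "'a measure" and Y
        unfolding c4_def by (intro Bochner_Integration.integral_nonneg) (simp add: zero_le_even_power)
      have c4_kurt: "c4 N Y = kurt N Y * (var N Y)^2" if "var N Y > 0" for N :: "'a measure" and Y
        using that unfolding kurt_def c4_def by simp
      have B_eq: "B n = c4 (M n) (XD_tot (D n) (X n)) + (var (M n) (XD_tot (D n) (X n)))^2" for n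
        unfolding B_def c4_kurt[OF varD_pos] by (simp add: algebra_simps)
      have B0: "B n \<ge> 0" for n unfolding B_eq using c4_nonneg[of "M n"] by (simp add: add_nonneg_nonneg)
      have ev1: "eventually (\<lambda>n. card (I n) \<ge> 1) sequentially"
        using card_inf by (simp add: filterlim_at_top)
      have sbpos: "sb n > 0" if "card (I n) \<ge> 1" for n
      proof -
        have "I n \<noteq> {}" using that by auto
        then have "(\<Sum>i\<in>I n. var (M n) (X n i)) > 0" using fin(1)[of n] var_pos[of _ n]
          by (intro sum_pos) auto
        then show ?thesis using that by (simp add: sb_def sigma_bar2_def)
      qed
      have gpos: "eventually (\<lambda>n. gg n > 0) sequentially"
        using ev1
      proof eventually_elim
        case (elim n)
        then have "sb n > 0" by (rule sbpos)
        then show ?case using elim by (simp add: gg_def)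
      qed
      have lim2: "(\<lambda>n. B n / (real (RD n) * gg n)) \<longlonglongrightarrow> 0"
        by (rule block_term[OF B0 gpos RD2]) (use block in \<open>simp add: B_def gg_def sb_def\<close>)
      have "filterlim (\<lambda>n. real (card (I n))) at_top sequentially"
        using card_inf filterlim_real_sequentially by (auto intro: filterlim_compose)
      then have "filterlim (\<lambda>n. \<epsilon>^2 * real (card (I n))) at_top sequentially"
        using \<epsilon> by (intro filterlim_tendsto_pos_mult_at_top[OF tendsto_const]) auto
      then have lim1: "(\<lambda>n. 9/2 * (K' + 1) * (C' + 1) / (\<epsilon>^2 * real (card (I n)))) \<longlonglongrightarrow> 0"
        by (intro tendsto_divide_0[OF tendsto_const] filterlim_at_top_imp_at_infinity)
      have limb: "bnd \<longlonglongrightarrow> 0"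
        unfolding bnd_def using tendsto_add[OF lim1 tendsto_mult[OF tendsto_const lim2, of "9 / \<epsilon>^2"]] by simp
      have key: "eventually (\<lambda>n. measure (M n) {\<omega> \<in> space (M n). \<bar>?sh n \<omega> / ?V n - 1\<bar> > \<epsilon>} \<le> bnd n) sequentially"
        using ev1 C
      proof eventually_elim
        case (elim n)
        interpret P: prob_space "M n" by (rule prob)
        have e1: "mean (M n) (?sh n) = ?V n"
          and e2: "?V n = (\<Sum>i\<in>I n. var (M n) (X n i) * (1 + 1 / real (R n i))) + var (M n) (XD_tot (D n) (X n)) * (1 + 1 / real (RD n))"
          and m[measurable]: "?sh n \<in> borel_measurable (M n)"
          and ii: "integrable (M n) (\<lambda>\<omega>. (?sh n \<omega>)^2)"
          and q: "integral\<^sup>L (M n) (\<lambda>\<omega>. (?sh n \<omega> - mean (M n) (?sh n))^2) \<le> ?Q n"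
          using pn[of n] by auto
        have cpos: "real (card (I n)) > 0" using elim by simp
        have sbp: "sb n > 0" using sbpos elim by simp
        have sumv: "(\<Sum>i\<in>I n. var (M n) (X n i)) = real (card (I n)) * sb n"
          using cpos by (simp add: sb_def sigma_bar2_def)
        have AV: "real (card (I n)) * sb n \<le> ?V n"
        proof -
          have "(\<Sum>i\<in>I n. var (M n) (X n i)) \<le> (\<Sum>i\<in>I n. var (M n) (X n i) * (1 + 1 / real (R n i)))"
          proof (intro sum_mono)
            fix i assume i: "i \<in> I n"
            have "var (M n) (X n i) > 0" using var_pos[of i n] i by simp
            then show "var (M n) (X n i) \<le> var (M n) (X n i) * (1 + 1 / real (R n i))"
              by (simp add: algebra_simps)
          qed
          moreover have "var (M n) (XD_tot (D n) (X n)) * (1 + 1 / real (RD n)) > 0"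
          proof -
            have "(1::real) + 1 / real (RD n) > 0" by (simp add: add_pos_nonneg)
            then show ?thesis using varD_pos[of n] by (intro mult_pos_pos)
          qed
          ultimately show ?thesis unfolding e2 sumv[symmetric] by linarith
        qed
        have Vpos: "?V n > 0" using AV cpos sbp by (smt (verit) mult_pos_pos)
        have P1: "measure (M n) {\<omega> \<in> space (M n). \<bar>?sh n \<omega> / ?V n - 1\<bar> > \<epsilon>}
            \<le> P.prob {\<omega> \<in> space (M n). \<epsilon> * ?V n \<le> \<bar>?sh n \<omega> - P.expectation (?sh n)\<bar>}"
        proof (rule P.finite_measure_mono)
          show "{\<omega> \<in> space (M n). \<epsilon> * ?V n \<le> \<bar>?sh n \<omega> - P.expectation (?sh n)\<bar>} \<in> P.events"
            by measurable
          show "{\<omega> \<in> space (M n). \<bar>?sh n \<omega> / ?V n - 1\<bar> > \<epsilon>}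
              \<subseteq> {\<omega> \<in> space (M n). \<epsilon> * ?V n \<le> \<bar>?sh n \<omega> - P.expectation (?sh n)\<bar>}"
          proof safe
            fix \<omega> assume a: "\<bar>?sh n \<omega> / ?V n - 1\<bar> > \<epsilon>"
            have "\<bar>?sh n \<omega> - ?V n\<bar> = ?V n * \<bar>?sh n \<omega> / ?V n - 1\<bar>"
            proof -
              have "?sh n \<omega> - ?V n = ?V n * (?sh n \<omega> / ?V n - 1)" using Vpos by (simp add: field_simps)
              then show ?thesis using Vpos by (simp add: abs_mult)
            qed
            moreover have "?V n * \<epsilon> \<le> ?V n * \<bar>?sh n \<omega> / ?V n - 1\<bar>"
              using a Vpos by (intro mult_left_mono) auto
            moreover have "P.expectation (?sh n) = ?V n" using e1 by (simp add: mean_def)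
            ultimately show "\<epsilon> * ?V n \<le> \<bar>?sh n \<omega> - P.expectation (?sh n)\<bar>" by (simp add: mult.commute)
          qed
        qed
        also have "\<dots> \<le> P.variance (?sh n) / (\<epsilon> * ?V n)^2"
          using \<epsilon> Vpos by (intro P.Chebyshev_inequality m ii) auto
        also have "\<dots> \<le> ?Q n / (\<epsilon> * ?V n)^2"
          using q by (intro divide_right_mono) (auto simp: mean_def)
        finally have P2: "measure (M n) {\<omega> \<in> space (M n). \<bar>?sh n \<omega> / ?V n - 1\<bar> > \<epsilon>} \<le> ?Q n / (\<epsilon> * ?V n)^2" .
        have Q0: "?Q n \<ge> 0"
        proof -
          have "0 \<le> integral\<^sup>L (M n) (\<lambda>\<omega>. (?sh n \<omega> - mean (M n) (?sh n))^2)"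
            by (intro Bochner_Integration.integral_nonneg) simp
          then show ?thesis using q by linarith
        qed
        have Kp: "K' + 1 \<ge> 0" by (simp add: K'_def)
        have Cp: "C' + 1 \<ge> 0" by (simp add: C'_def)
        have gam: "(\<Sum>i\<in>I n. (var (M n) (X n i))^2) \<le> (C' + 1) * real (card (I n)) * (sb n)^2"
        proof -
          have g: "gamma2 (M n) (I n) (X n) = ((\<Sum>i\<in>I n. (var (M n) (X n i))^2) / real (card (I n)) - (sb n)^2) / (sb n)^2"
            by (simp add: gamma2_def sb_def)
          have "(\<Sum>i\<in>I n. (var (M n) (X n i))^2) = real (card (I n)) * (sb n)^2 * (gamma2 (M n) (I n) (X n) + 1)"
            unfolding g using cpos sbp by (simp add: field_simps)
          also have "\<dots> \<le> real (card (I n)) * (sb n)^2 * (C' + 1)"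
            using elim cpos sbp by (intro mult_left_mono) (auto simp: C'_def)
          finally show ?thesis by (simp add: mult_ac)
        qed
        have Qb: "?Q n \<le> 9/2 * (K' + 1) * (C' + 1) * real (card (I n)) * (sb n)^2 + 9 * B n / real (RD n)"
        proof -
          have "(\<Sum>i\<in>I n. 9 * (c4 (M n) (X n i) + (var (M n) (X n i))^2) / real (R n i))
              \<le> (\<Sum>i\<in>I n. 9/2 * (K' + 1) * (var (M n) (X n i))^2)"
          proof (intro sum_mono)
            fix i assume i: "i \<in> I n"
            have vp: "var (M n) (X n i) > 0" using var_pos[of i n] i by simp
            have Ri: "real (R n i) \<ge> 2" using R1[of i n] i by simp
            have nn: "c4 (M n) (X n i) + (var (M n) (X n i))^2 \<ge> 0" using c4_nonneg[of "M n" "X n i"] by simp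
            have "9 * (c4 (M n) (X n i) + (var (M n) (X n i))^2) / real (R n i)
                \<le> 9 * (c4 (M n) (X n i) + (var (M n) (X n i))^2) / 2"
              using Ri nn by (intro divide_left_mono) auto
            also have "c4 (M n) (X n i) \<le> K' * (var (M n) (X n i))^2"
            proof -
              have "kurt (M n) (X n i) \<le> K" using K i by blast
              then have "kurt (M n) (X n i) \<le> K'" unfolding K'_def by linarith
              then have "kurt (M n) (X n i) * (var (M n) (X n i))^2 \<le> K' * (var (M n) (X n i))^2"
                by (intro mult_right_mono) auto
              then show ?thesis using c4_kurt[OF vp] by simp
            qed
            then have "9 * (c4 (M n) (X n i) + (var (M n) (X n i))^2) / 2 \<le> 9/2 * (K' + 1) * (var (M n) (X n i))^2"
              by (simp add: algebra_simps)
            finally show "9 * (c4 (M n) (X n i) + (var (M n) (X n i))^2) / real (R n i) \<le> 9/2 * (K' + 1) * (var (M n) (X n i))^2" .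
          qed
          also have "\<dots> = 9/2 * (K' + 1) * (\<Sum>i\<in>I n. (var (M n) (X n i))^2)"
            by (simp add: sum_distrib_left)
          also have "\<dots> \<le> 9/2 * (K' + 1) * ((C' + 1) * real (card (I n)) * (sb n)^2)"
            using gam Kp by (intro mult_left_mono) auto
          finally show ?thesis by (simp add: B_eq mult_ac)
        qed
        have "measure (M n) {\<omega> \<in> space (M n). \<bar>?sh n \<omega> / ?V n - 1\<bar> > \<epsilon>}
            \<le> 9/2 * (K' + 1) * (C' + 1) / (\<epsilon>^2 * real (card (I n))) + 9 / \<epsilon>^2 * (B n / (real (RD n) * ((sb n)^2 * (real (card (I n)))^2)))"
          by (rule final_arith[OF P2 \<epsilon> cpos sbp AV Q0 _ Qb]) (use RD2[of n] in simp)
        then show ?case by (simp add: bnd_def gg_def)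
      qed
      show "(\<lambda>n. measure (M n) {\<omega> \<in> space (M n). \<bar>?sh n \<omega> / ?V n - 1\<bar> > \<epsilon>}) \<longlonglongrightarrow> 0"
        by (rule tendsto_sandwich[OF _ key tendsto_const limb]) simp
    qed
  qed
qed



end
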